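(* The type-independent absolute robustness $M_{\mathrm{abs}}$ is a type-independent LOSR monotone: for every nonsignaling resource $R$ (of arbitrary type and dimensions) and every LOSR-free transformation $\tau$ (possibly changing the type and dimensions of the resource), $M_{\mathrm{abs}}(\tau[R])\le M_{\mathrm{abs}}(R)$.
   Context: Systems have a dimension and a type in $\{\mathsf{I},\mathsf{C},\mathsf{Q}\}$ (trivial = dimension 1, classical, quantum). A bipartite resource with Alice's input/output $\mathcal{X},\mathcal{A}$ and Bob's input/output $\mathcal{Y},\mathcal{B}$ is a completely positive linear map from operators on $\mathcal{X}\otimes\mathcal{Y}$ to operators on $\mathcal{A}\otimes\mathcal{B}$, trace preserving on product inputs, nonsignaling in both directions, and with classicality constraints (classical output $\mathcal{A}$: $\langle i|R[\cdot]|j\rangle_{\mathcal{A}}=0$ for $i\neq j$; classical input $\mathcal{X}$: $R[|i\rangle\langle j|\otimes\psi]=0$ for $i\ne j$; similarly for Bob). It is LOSR-free if it equals $\sum_ip_iR^i_{\mathcal{A}|\mathcal{X}}\otimes R^i_{\mathcal{B}|\mathcal{Y}}$ with $(p_i)$ a probability distribution and single-party channels of the same types. $\mathbf{R}^{\mathrm{free}}$ denotes the set of LOSR-free resources of all types and dimensions. For a resource $R$, $M_{\mathrm{abs}}(R)=\min\{s\ge0:\ (R+sS)/(1+s)\in\mathbf{R}^{\mathrm{free}}\text{ for some LOSR-free }S\text{ with the same type and dimensions as }R\}$. An LOSR-free transformation is a map $\tau[R]=\sum_\lambda p_\lambda(\mathcal{E}^\lambda_{\mathcal{A}}\otimes\mathcal{E}^\lambda_{\mathcal{B}})\circ(R\otimes\mathrm{id}_{\mathcal{M}_A\mathcal{M}_B})\circ(\mathcal{P}^\lambda_{\mathcal{A}}\otimes\mathcal{P}^\lambda_{\mathcal{B}})$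 (a convex mixture of products of local supermaps: pre-processing channels $\mathcal{P}^\lambda_{\mathcal{A}}$ from a new input $\mathcal{X}'$ to $\mathcal{X}\otimes\mathcal{M}_A$ and post-processing channels $\mathcal{E}^\lambda_{\mathcal{A}}$ from $\mathcal{A}\otimes\mathcal{M}_A$ to a new output $\mathcal{A}'$, similarly for Bob), mapping resources of one type and dimension to resources of a (possibly different) type and dimension; it is linear and maps LOSR-free resources to LOSR-free resources. *)

theory Defs
  imports "Jordan_Normal_Form.Matrix" "Jordan_Normal_Form.Conjugate" "HOL-Library.Complex_Order"
    "HOL-Library.Extended_Real"
begin

text \<open>Operators on C^d are d x d complex matrices. Tensor factors are encoded
 in the usual lexicographic (Kronecker) index convention: index (i,k) of C^d1 (x) C^d2
 is i*d2+k.\<close>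

type_synonym cmap = "complex mat \<Rightarrow> complex mat"

definition kron :: "complex mat \<Rightarrow> complex mat \<Rightarrow> complex mat" where
  "kron A B = mat (dim_row A * dim_row B) (dim_col A * dim_col B)
     (\<lambda>(i,j). A $$ (i div dim_row B, j div dim_col B) * B $$ (i mod dim_row B, j mod dim_col B))"

definition emat :: "nat \<Rightarrow> nat \<Rightarrow> nat \<Rightarrow> complex mat" where
  "emat d i j = mat d d (\<lambda>(a,b). if a = i \<and> b = j then 1 else 0)"

definition msum :: "nat \<Rightarrow> nat \<Rightarrow> (nat \<Rightarrow> complex mat) \<Rightarrow> complex mat" where
  "msum n d f = mat d d (\<lambda>rc. \<Sum>l<n. f l $$ rc)"

definition trace :: "complex mat \<Rightarrow> complex" where
  "trace A = (\<Sum>i<dim_row A. A $$ (i,i))"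

definition psd :: "nat \<Rightarrow> complex mat \<Rightarrow> bool" where
  "psd n A \<longleftrightarrow> A \<in> carrier_mat n n \<and>
     (\<forall>v \<in> carrier_vec n. 0 \<le> conjugate v \<bullet> (A *\<^sub>v v))"

definition density :: "nat \<Rightarrow> complex mat \<Rightarrow> bool" where
  "density n A \<longleftrightarrow> psd n A \<and> trace A = 1"

definition ptrace_B :: "nat \<Rightarrow> nat \<Rightarrow> complex mat \<Rightarrow> complex mat" where
  "ptrace_B dA dB M = mat dA dA (\<lambda>(i,j). \<Sum>k<dB. M $$ (i*dB+k, j*dB+k))"

definition ptrace_A :: "nat \<Rightarrow> nat \<Rightarrow> complex mat \<Rightarrow> complex mat" where
  "ptrace_A dA dB M = mat dB dB (\<lambda>(k,l). \<Sum>i<dA. M $$ (i*dB+k, i*dB+l))"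

text \<open>Tensor product of linear maps Phi : L(C^a1) -> L(C^b1), Psi : L(C^a2) -> L(C^b2),
 defined on all of L(C^a1 (x) C^a2) by linear extension from matrix units.\<close>
definition map_tensor :: "nat \<Rightarrow> nat \<Rightarrow> nat \<Rightarrow> nat \<Rightarrow> cmap \<Rightarrow> cmap \<Rightarrow> cmap" where
  "map_tensor a1 a2 b1 b2 \<Phi> \<Psi> M = mat (b1*b2) (b1*b2) (\<lambda>rc.
     \<Sum>i<a1. \<Sum>j<a1. \<Sum>k<a2. \<Sum>l<a2.
       M $$ (i*a2+k, j*a2+l) * kron (\<Phi> (emat a1 i j)) (\<Psi> (emat a2 k l)) $$ rc)"

text \<open>Reordering of tensor factors: an operator on C^d1 (x) C^d2 (x) C^d3 (x) C^d4 is mapped to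
 the corresponding operator on C^d1 (x) C^d3 (x) C^d2 (x) C^d4 (conjugation by the swap of the
 two middle factors).\<close>
definition swap_idx :: "nat \<Rightarrow> nat \<Rightarrow> nat \<Rightarrow> nat \<Rightarrow> nat \<Rightarrow> nat" where
  "swap_idx d1 d2 d3 d4 r =
     (let x4 = r mod d4; x2 = (r div d4) mod d2; x3 = (r div (d4*d2)) mod d3;
          x1 = r div (d4*d2*d3) in ((x1*d2+x2)*d3+x3)*d4+x4)"

definition swap_mid :: "nat \<Rightarrow> nat \<Rightarrow> nat \<Rightarrow> nat \<Rightarrow> complex mat \<Rightarrow> complex mat" where
  "swap_mid d1 d2 d3 d4 M = mat (d1*d3*d2*d4) (d1*d3*d2*d4)
     (\<lambda>(r,c). M $$ (swap_idx d1 d2 d3 d4 r, swap_idx d1 d2 d3 d4 c))"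

definition lin_map :: "nat \<Rightarrow> nat \<Rightarrow> cmap \<Rightarrow> bool" where
  "lin_map din dout \<Phi> \<longleftrightarrow>
     (\<forall>M \<in> carrier_mat din din. \<Phi> M \<in> carrier_mat dout dout) \<and>
     (\<forall>M \<in> carrier_mat din din. \<forall>N \<in> carrier_mat din din. \<Phi> (M + N) = \<Phi> M + \<Phi> N) \<and>
     (\<forall>M \<in> carrier_mat din din. \<forall>c. \<Phi> (c \<cdot>\<^sub>m M) = c \<cdot>\<^sub>m \<Phi> M)"

text \<open>ampliation id_k (x) Phi (the C^k factor first)\<close>
definition ampl :: "nat \<Rightarrow> nat \<Rightarrow> nat \<Rightarrow> cmap \<Rightarrow> cmap" where
  "ampl k din dout \<Phi> M = mat (k*dout) (k*dout) (\<lambda>(r,c).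
     \<Phi> (mat din din (\<lambda>(i,j). M $$ ((r div dout)*din + i, (c div dout)*din + j)))
       $$ (r mod dout, c mod dout))"

definition compl_pos :: "nat \<Rightarrow> nat \<Rightarrow> cmap \<Rightarrow> bool" where
  "compl_pos din dout \<Phi> \<longleftrightarrow>
     (\<forall>k M. psd (k*din) M \<longrightarrow> psd (k*dout) (ampl k din dout \<Phi> M))"

definition trace_pres :: "nat \<Rightarrow> cmap \<Rightarrow> bool" where
  "trace_pres din \<Phi> \<longleftrightarrow> (\<forall>M \<in> carrier_mat din din. trace (\<Phi> M) = trace M)"

definition channel :: "nat \<Rightarrow> nat \<Rightarrow> cmap \<Rightarrow> bool" where
  "channel din dout \<Phi> \<longleftrightarrow> lin_map din dout \<Phi> \<and> compl_pos din dout \<Phi> \<and> trace_pres din \<Phi>"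

definition cl_output :: "nat \<Rightarrow> nat \<Rightarrow> cmap \<Rightarrow> bool" where
  "cl_output din dout \<Phi> \<longleftrightarrow> (\<forall>M \<in> carrier_mat din din. \<forall>i j.
     i < dout \<longrightarrow> j < dout \<longrightarrow> i \<noteq> j \<longrightarrow> \<Phi> M $$ (i,j) = 0)"

definition cl_input :: "nat \<Rightarrow> nat \<Rightarrow> cmap \<Rightarrow> bool" where
  "cl_input din dout \<Phi> \<longleftrightarrow> (\<forall>i j.
     i < din \<longrightarrow> j < din \<longrightarrow> i \<noteq> j \<longrightarrow> \<Phi> (emat din i j) = 0\<^sub>m dout dout)"

datatype stype = Triv | Cl | Qu

type_synonym sys = "stype \<times> nat"

definition valid_sys :: "sys \<Rightarrow> bool" where
  "valid_sys s \<longleftrightarrow> (if fst s = Triv then snd s = 1 else snd s \<ge> 1)"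

abbreviation dm :: "sys \<Rightarrow> nat" where "dm s \<equiv> snd s"
abbreviation is_cl :: "sys \<Rightarrow> bool" where "is_cl s \<equiv> fst s = Cl"

definition local_chan :: "sys \<Rightarrow> sys \<Rightarrow> cmap \<Rightarrow> bool" where
  "local_chan X A \<Phi> \<longleftrightarrow> valid_sys X \<and> valid_sys A \<and> channel (dm X) (dm A) \<Phi> \<and>
     (is_cl X \<longrightarrow> cl_input (dm X) (dm A) \<Phi>) \<and> (is_cl A \<longrightarrow> cl_output (dm X) (dm A) \<Phi>)"

datatype btype = BT (inX: sys) (outA: sys) (inY: sys) (outB: sys)

definition resource :: "btype \<Rightarrow> cmap \<Rightarrow> bool" where
  "resource T R \<longleftrightarrow>
    (let dX = dm (inX T); dA = dm (outA T); dY = dm (inY T); dB = dm (outB T) in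
     valid_sys (inX T) \<and> valid_sys (outA T) \<and> valid_sys (inY T) \<and> valid_sys (outB T) \<and>
     lin_map (dX*dY) (dA*dB) R \<and> compl_pos (dX*dY) (dA*dB) R \<and>
     (\<forall>\<rho> \<in> carrier_mat dX dX. \<forall>\<sigma> \<in> carrier_mat dY dY.
        trace (R (kron \<rho> \<sigma>)) = trace \<rho> * trace \<sigma>) \<and>
     (\<forall>\<rho> \<sigma> \<sigma>'. density dX \<rho> \<longrightarrow> density dY \<sigma> \<longrightarrow> density dY \<sigma>' \<longrightarrow>
        ptrace_B dA dB (R (kron \<rho> \<sigma>)) = ptrace_B dA dB (R (kron \<rho> \<sigma>'))) \<and>
     (\<forall>\<rho> \<rho>' \<sigma>. density dX \<rho> \<longrightarrow> density dX \<rho>' \<longrightarrow> density dY \<sigma> \<longrightarrow>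
        ptrace_A dA dB (R (kron \<rho> \<sigma>)) = ptrace_A dA dB (R (kron \<rho>' \<sigma>))) \<and>
     (is_cl (outA T) \<longrightarrow> (\<forall>M \<in> carrier_mat (dX*dY) (dX*dY). \<forall>i j k l.
        i < dA \<longrightarrow> j < dA \<longrightarrow> k < dB \<longrightarrow> l < dB \<longrightarrow> i \<noteq> j \<longrightarrow> R M $$ (i*dB+k, j*dB+l) = 0)) \<and>
     (is_cl (outB T) \<longrightarrow> (\<forall>M \<in> carrier_mat (dX*dY) (dX*dY). \<forall>i j k l.
        i < dA \<longrightarrow> j < dA \<longrightarrow> k < dB \<longrightarrow> l < dB \<longrightarrow> k \<noteq> l \<longrightarrow> R M $$ (i*dB+k, j*dB+l) = 0)) \<and>
     (is_cl (inX T) \<longrightarrow> (\<forall>i j. i < dX \<longrightarrow> j < dX \<longrightarrow> i \<noteq> j \<longrightarrow>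
        (\<forall>\<psi> \<in> carrier_mat dY dY. R (kron (emat dX i j) \<psi>) = 0\<^sub>m (dA*dB) (dA*dB)))) \<and>
     (is_cl (inY T) \<longrightarrow> (\<forall>k l. k < dY \<longrightarrow> l < dY \<longrightarrow> k \<noteq> l \<longrightarrow>
        (\<forall>\<psi> \<in> carrier_mat dX dX. R (kron \<psi> (emat dY k l)) = 0\<^sub>m (dA*dB) (dA*dB)))))"

definition losr_free :: "btype \<Rightarrow> cmap \<Rightarrow> bool" where
  "losr_free T R \<longleftrightarrow>
    (let dX = dm (inX T); dA = dm (outA T); dY = dm (inY T); dB = dm (outB T) in
     \<exists>(n::nat) (p::nat \<Rightarrow> real) RA RB.
       (\<forall>i<n. p i \<ge> 0) \<and> (\<Sum>i<n. p i) = 1 \<and>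
       (\<forall>i<n. local_chan (inX T) (outA T) (RA i) \<and> local_chan (inY T) (outB T) (RB i)) \<and>
       (\<forall>M \<in> carrier_mat (dX*dY) (dX*dY).
          R M = msum n (dA*dB) (\<lambda>i. complex_of_real (p i) \<cdot>\<^sub>m map_tensor dX dY dA dB (RA i) (RB i) M)))"

definition mix :: "real \<Rightarrow> cmap \<Rightarrow> cmap \<Rightarrow> cmap" where
  "mix s R S = (\<lambda>M. complex_of_real (1/(1+s)) \<cdot>\<^sub>m (R M + complex_of_real s \<cdot>\<^sub>m S M))"

text \<open>absolute robustness (infimum in the extended reals; it is a minimum whenever the set is
 nonempty and the infimum is attained, and equals \<infinity> if no admissible s exists)\<close>
definition M_abs :: "btype \<Rightarrow> cmap \<Rightarrow> ereal" where
  "M_abs T R = Inf {ereal s | s. s \<ge> 0 \<and> (\<exists>S. losr_free T S \<and> losr_free T (mix s R S))}"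

text \<open>Pre-processing P_A^l : X' -> X (x) M_A, post-processing E_A^l : A (x) M_A -> A'
 (memory M_A quantum of dimension mA), similarly for Bob; the local operations respect the
 classicality of the new input/output systems.\<close>
definition losr_trans :: "btype \<Rightarrow> btype \<Rightarrow> (cmap \<Rightarrow> cmap) \<Rightarrow> bool" where
  "losr_trans T T' \<tau> \<longleftrightarrow>
    (let dX = dm (inX T); dA = dm (outA T); dY = dm (inY T); dB = dm (outB T);
         dX' = dm (inX T'); dA' = dm (outA T'); dY' = dm (inY T'); dB' = dm (outB T') in
     valid_sys (inX T') \<and> valid_sys (outA T') \<and> valid_sys (inY T') \<and> valid_sys (outB T') \<and>
     (\<exists>(n::nat) (p::nat \<Rightarrow> real) (mA::nat) (mB::nat) PA PB EA EB.
       mA \<ge> 1 \<and> mB \<ge> 1 \<and>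
       (\<forall>l<n. p l \<ge> 0) \<and> (\<Sum>l<n. p l) = 1 \<and>
       (\<forall>l<n. channel dX' (dX*mA) (PA l) \<and> (is_cl (inX T') \<longrightarrow> cl_input dX' (dX*mA) (PA l)) \<and>
              channel dY' (dY*mB) (PB l) \<and> (is_cl (inY T') \<longrightarrow> cl_input dY' (dY*mB) (PB l)) \<and>
              channel (dA*mA) dA' (EA l) \<and> (is_cl (outA T') \<longrightarrow> cl_output (dA*mA) dA' (EA l)) \<and>
              channel (dB*mB) dB' (EB l) \<and> (is_cl (outB T') \<longrightarrow> cl_output (dB*mB) dB' (EB l))) \<and>
       (\<forall>R. \<forall>M \<in> carrier_mat (dX'*dY') (dX'*dY').
          \<tau> R M = msum n (dA'*dB') (\<lambda>l. complex_of_real (p l) \<cdot>\<^sub>m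
            map_tensor (dA*mA) (dB*mB) dA' dB' (EA l) (EB l)
             (swap_mid dA dB mA mB
               (map_tensor (dX*dY) (mA*mB) (dA*dB) (mA*mB) R (\<lambda>N. N)
                 (swap_mid dX mA dY mB
                   (map_tensor dX' dY' (dX*mA) (dY*mB) (PA l) (PB l) M))))))))"

end

theory Submission
  imports Defs
begin
lemma sum_split: "(\<Sum>r<a*b. f r) = (\<Sum>i<a. \<Sum>j<b. f (i*b+j))" for f :: "nat \<Rightarrow> 'a::comm_monoid_add"
proof -
  have "(\<Sum>r<a*b. f r) = (\<Sum>i<a. sum f {i*b..<i*b+b})" by (simp add: sum.nat_group)
  also have "\<dots> = (\<Sum>i<a. \<Sum>j<b. f (i*b+j))"
    by (rule sum.cong[OF refl]) (simp add: sum.shift_bounds_nat_ivl[where k="i*b" and m=0 for i, simplified] atLeast0LessThan add.commute)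
  finally show ?thesis .
qed

lemma idx_lt: "i < a \<Longrightarrow> k < b \<Longrightarrow> i*b+k < a*(b::nat)"
proof -
  assume "i < a" "k < b"
  then have "i*b + k < i*b + b" by simp
  also have "\<dots> = (i+1)*b" by simp
  also have "\<dots> \<le> a*b" using \<open>i<a\<close> by (intro mult_right_mono) auto
  finally show ?thesis .
qed

lemma idx_div[simp]: "k < (b::nat) \<Longrightarrow> (i*b+k) div b = i"
  by simp
lemma idx_mod[simp]: "k < (b::nat) \<Longrightarrow> (i*b+k) mod b = k"
  by simp

lemma div_lt: "r < a*(b::nat) \<Longrightarrow> r div b < a"
  by (simp add: less_mult_imp_div_less)
lemma mod_lt: "r < a*(b::nat) \<Longrightarrow> r mod b < b"
  by (cases "b = 0") auto

lemma dim_kron[simp]: "dim_row (kron A B) = dim_row A * dim_row B" "dim_col (kron A B) = dim_col A * dim_col B"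
  by (simp_all add: kron_def)

lemma kron_carrier[simp]: "A \<in> carrier_mat a a \<Longrightarrow> B \<in> carrier_mat b b \<Longrightarrow> kron A B \<in> carrier_mat (a*b) (a*b)"
  unfolding carrier_mat_def by simp

lemma index_kron: "A \<in> carrier_mat a a \<Longrightarrow> B \<in> carrier_mat b b \<Longrightarrow> r < a*b \<Longrightarrow> c < a*b \<Longrightarrow>
   kron A B $$ (r,c) = A $$ (r div b, c div b) * B $$ (r mod b, c mod b)"
  unfolding carrier_mat_def kron_def by (elim CollectE conjE) (simp add: index_mat)

lemma index_kron2[simp]: "A \<in> carrier_mat a a \<Longrightarrow> B \<in> carrier_mat b b \<Longrightarrow> i < a \<Longrightarrow> j < a \<Longrightarrow> k < b \<Longrightarrow> l < b \<Longrightarrow>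
   kron A B $$ (i*b+k,j*b+l) = A $$ (i, j) * B $$ (k, l)"
  using index_kron[of A a B b "i*b+k" "j*b+l"] idx_lt[of i a k b] idx_lt[of j a l b] by simp

lemma emat_carrier[simp]: "emat d i j \<in> carrier_mat d d"
  by (simp add: emat_def)
lemma dim_emat[simp]: "dim_row (emat d i j) = d" "dim_col (emat d i j) = d"
  by (simp_all add: emat_def)
lemma index_emat[simp]: "r < d \<Longrightarrow> c < d \<Longrightarrow> emat d i j $$ (r,c) = (if r = i \<and> c = j then 1 else 0)"
  by (simp add: emat_def)

lemma msum_carrier[simp]: "msum n d f \<in> carrier_mat d d"
  by (simp add: msum_def)
lemma dim_msum[simp]: "dim_row (msum n d f) = d" "dim_col (msum n d f) = d"
  by (simp_all add: msum_def)
lemma index_msum[simp]: "r < d \<Longrightarrow> c < d \<Longrightarrow> msum n d f $$ (r,c) = (\<Sum>l<n. f l $$ (r,c))"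
  by (simp add: msum_def)

lemma lin_mapD: assumes "lin_map n m F"
  shows "M \<in> carrier_mat n n \<Longrightarrow> F M \<in> carrier_mat m m"
   and "M \<in> carrier_mat n n \<Longrightarrow> N \<in> carrier_mat n n \<Longrightarrow> F (M + N) = F M + F N"
   and "M \<in> carrier_mat n n \<Longrightarrow> F (c \<cdot>\<^sub>m M) = c \<cdot>\<^sub>m F M"
  using assms by (auto simp: lin_map_def)

lemma lin_map_zero: assumes "lin_map n m F" shows "F (0\<^sub>m n n) = 0\<^sub>m m m"
proof -
  have "F (0\<^sub>m n n) = F (0 \<cdot>\<^sub>m 0\<^sub>m n n)" by simp
  also have "\<dots> = 0 \<cdot>\<^sub>m F (0\<^sub>m n n)" using lin_mapD(3)[OF assms, of "0\<^sub>m n n" 0] by simp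
  also have "\<dots> = 0\<^sub>m m m" using lin_mapD(1)[OF assms, of "0\<^sub>m n n"] by auto
  finally show ?thesis .
qed

lemma lin_map_comp: "lin_map a b F \<Longrightarrow> lin_map b c G \<Longrightarrow> lin_map a c (\<lambda>M. G (F M))"
  unfolding lin_map_def by auto

lemma lin_map_msum: assumes "lin_map n m F" "\<And>i. i < N \<Longrightarrow> f i \<in> carrier_mat n n"
  shows "F (msum N n (\<lambda>i. c i \<cdot>\<^sub>m f i)) = msum N m (\<lambda>i. c i \<cdot>\<^sub>m F (f i))"
  using assms(2)
proof (induction N)
  case 0
  have "msum 0 n (\<lambda>i. c i \<cdot>\<^sub>m f i) = 0\<^sub>m n n" "msum 0 m (\<lambda>i. c i \<cdot>\<^sub>m F (f i)) = 0\<^sub>m m m"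
    by (auto simp: msum_def)
  then show ?case using lin_map_zero[OF assms(1)] by simp
next
  case (Suc N)
  have split: "msum (Suc N) d g = msum N d g + g N" if "g N \<in> carrier_mat d d" for d g
    using that by (intro eq_matI) auto
  have fN: "f N \<in> carrier_mat n n" using Suc by auto
  have "F (msum (Suc N) n (\<lambda>i. c i \<cdot>\<^sub>m f i)) = F (msum N n (\<lambda>i. c i \<cdot>\<^sub>m f i) + c N \<cdot>\<^sub>m f N)"
    using fN by (subst split) auto
  also have "\<dots> = F (msum N n (\<lambda>i. c i \<cdot>\<^sub>m f i)) + c N \<cdot>\<^sub>m F (f N)"
    using fN lin_mapD[OF assms(1)] by simp
  also have "\<dots> = msum N m (\<lambda>i. c i \<cdot>\<^sub>m F (f i)) + c N \<cdot>\<^sub>m F (f N)"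
    using Suc by simp
  also have "\<dots> = msum (Suc N) m (\<lambda>i. c i \<cdot>\<^sub>m F (f i))"
    using fN lin_mapD(1)[OF assms(1)] by (subst split) auto
  finally show ?case .
qed

lemma mat_expand: assumes "M \<in> carrier_mat n n"
  shows "M = msum (n*n) n (\<lambda>k. M $$ (k div n, k mod n) \<cdot>\<^sub>m emat n (k div n) (k mod n))"
proof (rule eq_matI)
  fix r c assume rc: "r < dim_row (msum (n*n) n (\<lambda>k. M $$ (k div n, k mod n) \<cdot>\<^sub>m emat n (k div n) (k mod n)))"
    "c < dim_col (msum (n*n) n (\<lambda>k. M $$ (k div n, k mod n) \<cdot>\<^sub>m emat n (k div n) (k mod n)))"
  then have rc': "r < n" "c < n" by auto
  have "msum (n*n) n (\<lambda>k. M $$ (k div n, k mod n) \<cdot>\<^sub>m emat n (k div n) (k mod n)) $$ (r,c)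
     = (\<Sum>i<n. \<Sum>j<n. M $$ (i,j) * (if r = i \<and> c = j then 1 else 0))"
    using rc' by (simp add: sum_split)
  also have "\<dots> = (\<Sum>i<n. if r = i then M $$ (r,c) else 0)"
    by (rule sum.cong[OF refl]) (use rc' in \<open>auto simp: sum.delta' if_distrib[of "\<lambda>x. _ * x"] cong: if_cong\<close>)
  also have "\<dots> = M $$ (r,c)" using rc' by (simp add: sum.delta)
  finally show "M $$ (r,c) = msum (n*n) n (\<lambda>k. M $$ (k div n, k mod n) \<cdot>\<^sub>m emat n (k div n) (k mod n)) $$ (r,c)" by simp
qed (use assms in auto)

lemma lin_expand: assumes "lin_map n m F" "M \<in> carrier_mat n n" "r < m" "c < m"
  shows "F M $$ (r,c) = (\<Sum>i<n. \<Sum>j<n. M $$ (i,j) * F (emat n i j) $$ (r,c))"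
proof -
  have "F M = msum (n*n) m (\<lambda>k. M $$ (k div n, k mod n) \<cdot>\<^sub>m F (emat n (k div n) (k mod n)))"
    by (subst mat_expand[OF assms(2)], subst lin_map_msum[OF assms(1)]) auto
  also have "\<dots> $$ (r,c) = (\<Sum>i<n. \<Sum>j<n. M $$ (i,j) * F (emat n i j) $$ (r,c))"
  proof -
    have d: "dim_row (F (emat n i j)) = m" "dim_col (F (emat n i j)) = m" for i j
      using lin_mapD(1)[OF assms(1), of "emat n i j"] by auto
    show ?thesis using assms d by (simp add: sum_split)
  qed
  finally show ?thesis .
qed

lemma lin_ext: assumes "lin_map n m F" "lin_map n m G" "\<And>i j. i < n \<Longrightarrow> j < n \<Longrightarrow> F (emat n i j) = G (emat n i j)"
  "M \<in> carrier_mat n n" shows "F M = G M"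
proof (rule eq_matI)
  show "dim_row (F M) = dim_row (G M)" "dim_col (F M) = dim_col (G M)"
    using lin_mapD(1)[OF assms(1) assms(4)] lin_mapD(1)[OF assms(2) assms(4)] by auto
  fix r c assume "r < dim_row (G M)" "c < dim_col (G M)"
  then have "r < m" "c < m" using lin_mapD(1)[OF assms(2) assms(4)] by auto
  then show "F M $$ (r,c) = G M $$ (r,c)"
    using lin_expand[OF assms(1) assms(4)] lin_expand[OF assms(2) assms(4)] assms(3) by simp
qed

lemma index_smult_c[simp]: "A \<in> carrier_mat d d \<Longrightarrow> r < d \<Longrightarrow> c < d \<Longrightarrow> (x \<cdot>\<^sub>m A) $$ (r,c) = x * A $$ (r,c)"
  by auto
lemma index_add_c[simp]: "A \<in> carrier_mat d d \<Longrightarrow> B \<in> carrier_mat d d \<Longrightarrow> r < d \<Longrightarrow> c < d \<Longrightarrow> (A + B) $$ (r,c) = A $$ (r,c) + B $$ (r,c)"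
  by auto

lemma map_tensor_carrier[simp]: "map_tensor a1 a2 b1 b2 \<Phi> \<Psi> M \<in> carrier_mat (b1*b2) (b1*b2)"
  by (simp add: map_tensor_def)

lemma lin_map_map_tensor: "lin_map (a1*a2) (b1*b2) (map_tensor a1 a2 b1 b2 \<Phi> \<Psi>)"
  unfolding lin_map_def
proof (intro conjI ballI allI)
  fix M N :: "complex mat" assume M: "M \<in> carrier_mat (a1*a2) (a1*a2)" and N: "N \<in> carrier_mat (a1*a2) (a1*a2)"
  show "map_tensor a1 a2 b1 b2 \<Phi> \<Psi> (M + N) = map_tensor a1 a2 b1 b2 \<Phi> \<Psi> M + map_tensor a1 a2 b1 b2 \<Phi> \<Psi> N"
    unfolding map_tensor_def
    by (rule eq_matI) (use M N in \<open>auto simp: idx_lt distrib_right sum.distrib intro!: sum.cong\<close>)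
next
  fix M :: "complex mat" and c assume M: "M \<in> carrier_mat (a1*a2) (a1*a2)"
  show "map_tensor a1 a2 b1 b2 \<Phi> \<Psi> (c \<cdot>\<^sub>m M) = c \<cdot>\<^sub>m map_tensor a1 a2 b1 b2 \<Phi> \<Psi> M"
    unfolding map_tensor_def
    by (rule eq_matI) (use M in \<open>auto simp: idx_lt sum_distrib_left mult.assoc intro!: sum.cong\<close>)
qed simp

lemma map_tensor_kron:
  assumes "lin_map a1 b1 \<Phi>" "lin_map a2 b2 \<Psi>" "A \<in> carrier_mat a1 a1" "B \<in> carrier_mat a2 a2"
  shows "map_tensor a1 a2 b1 b2 \<Phi> \<Psi> (kron A B) = kron (\<Phi> A) (\<Psi> B)"
proof (rule eq_matI)
  have PA: "\<Phi> A \<in> carrier_mat b1 b1" and PB: "\<Psi> B \<in> carrier_mat b2 b2"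
    using lin_mapD(1) assms by auto
  have Pe: "\<Phi> (emat a1 i j) \<in> carrier_mat b1 b1" "\<Psi> (emat a2 k l) \<in> carrier_mat b2 b2" for i j k l
    using lin_mapD(1) assms by auto
  show "dim_row (map_tensor a1 a2 b1 b2 \<Phi> \<Psi> (kron A B)) = dim_row (kron (\<Phi> A) (\<Psi> B))"
    "dim_col (map_tensor a1 a2 b1 b2 \<Phi> \<Psi> (kron A B)) = dim_col (kron (\<Phi> A) (\<Psi> B))"
    using PA PB by (auto simp: map_tensor_def)
  fix r c assume "r < dim_row (kron (\<Phi> A) (\<Psi> B))" "c < dim_col (kron (\<Phi> A) (\<Psi> B))"
  then have rc: "r < b1*b2" "c < b1*b2" using PA PB by auto
  have "map_tensor a1 a2 b1 b2 \<Phi> \<Psi> (kron A B) $$ (r,c) =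
     (\<Sum>i<a1. \<Sum>j<a1. \<Sum>k<a2. \<Sum>l<a2. (A $$ (i,j) * \<Phi> (emat a1 i j) $$ (r div b2, c div b2)) *
        (B $$ (k,l) * \<Psi> (emat a2 k l) $$ (r mod b2, c mod b2)))"
    unfolding map_tensor_def using rc assms(3,4) Pe
    by (auto simp: index_kron[OF Pe] mult_ac intro!: sum.cong)
  also have "\<dots> = (\<Sum>i<a1. \<Sum>j<a1. A $$ (i,j) * \<Phi> (emat a1 i j) $$ (r div b2, c div b2)) *
        (\<Sum>k<a2. \<Sum>l<a2. B $$ (k,l) * \<Psi> (emat a2 k l) $$ (r mod b2, c mod b2))"
    by (simp only: sum_distrib_right, simp only: sum_distrib_left)
  also have "\<dots> = kron (\<Phi> A) (\<Psi> B) $$ (r,c)"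
    using rc PA PB by (simp add: index_kron lin_expand[OF assms(1) assms(3)] lin_expand[OF assms(2) assms(4)] div_lt mod_lt)
  finally show "map_tensor a1 a2 b1 b2 \<Phi> \<Psi> (kron A B) $$ (r,c) = kron (\<Phi> A) (\<Psi> B) $$ (r,c)" .
qed

lemma map_tensor_phi_msum:
  assumes "\<And>M. M \<in> carrier_mat a1 a1 \<Longrightarrow> \<Phi> M = msum n b1 (\<lambda>i. q i \<cdot>\<^sub>m F i M)"
    "\<And>i M. M \<in> carrier_mat a1 a1 \<Longrightarrow> F i M \<in> carrier_mat b1 b1"
    "\<And>M. M \<in> carrier_mat a2 a2 \<Longrightarrow> \<Psi> M \<in> carrier_mat b2 b2"
  shows "map_tensor a1 a2 b1 b2 \<Phi> \<Psi> X = msum n (b1*b2) (\<lambda>i. q i \<cdot>\<^sub>m map_tensor a1 a2 b1 b2 (F i) \<Psi> X)"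
proof (rule eq_matI)
  fix r c assume "r < dim_row (msum n (b1*b2) (\<lambda>i. q i \<cdot>\<^sub>m map_tensor a1 a2 b1 b2 (F i) \<Psi> X))"
    "c < dim_col (msum n (b1*b2) (\<lambda>i. q i \<cdot>\<^sub>m map_tensor a1 a2 b1 b2 (F i) \<Psi> X))"
  then have rc: "r < b1*b2" "c < b1*b2" by auto
  have Pe: "\<Psi> (emat a2 k l) \<in> carrier_mat b2 b2" for k l using assms(3) by auto
  have Fe: "F i (emat a1 k l) \<in> carrier_mat b1 b1" for i k l using assms(2) by auto
  have Fd: "dim_row (F i (emat a1 k l)) = b1" "dim_col (F i (emat a1 k l)) = b1" for i k l using Fe[of i k l] by auto
  have "map_tensor a1 a2 b1 b2 \<Phi> \<Psi> X $$ (r,c) =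
    (\<Sum>i<a1. \<Sum>j<a1. \<Sum>k<a2. \<Sum>l<a2. X $$ (i*a2+k, j*a2+l) *
       ((\<Sum>m<n. q m * F m (emat a1 i j) $$ (r div b2, c div b2)) * \<Psi> (emat a2 k l) $$ (r mod b2, c mod b2)))"
    unfolding map_tensor_def using rc
    by (auto simp: index_kron[OF msum_carrier Pe] assms(1) div_lt mod_lt Fe Fd intro!: sum.cong)
  also have "\<dots> = (\<Sum>m<n. q m * (\<Sum>i<a1. \<Sum>j<a1. \<Sum>k<a2. \<Sum>l<a2. X $$ (i*a2+k, j*a2+l) *
       (F m (emat a1 i j) $$ (r div b2, c div b2) * \<Psi> (emat a2 k l) $$ (r mod b2, c mod b2))))"
    by (simp add: sum_distrib_left sum_distrib_right mult_ac sum.swap[of _ "{..<n}"])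
  also have "\<dots> = msum n (b1*b2) (\<lambda>i. q i \<cdot>\<^sub>m map_tensor a1 a2 b1 b2 (F i) \<Psi> X) $$ (r,c)"
    unfolding map_tensor_def using rc
    by (auto simp: index_kron[OF Fe Pe] intro!: sum.cong)
  finally show "map_tensor a1 a2 b1 b2 \<Phi> \<Psi> X $$ (r,c) = msum n (b1*b2) (\<lambda>i. q i \<cdot>\<^sub>m map_tensor a1 a2 b1 b2 (F i) \<Psi> X) $$ (r,c)" .
qed (auto simp: map_tensor_def)

lemma emat_kron: assumes "a < d1*d2" "b < d1*d2"
  shows "emat (d1*d2) a b = kron (emat d1 (a div d2) (b div d2)) (emat d2 (a mod d2) (b mod d2))"
proof (rule eq_matI)
  fix r c assume "r < dim_row (kron (emat d1 (a div d2) (b div d2)) (emat d2 (a mod d2) (b mod d2)))"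
     "c < dim_col (kron (emat d1 (a div d2) (b div d2)) (emat d2 (a mod d2) (b mod d2)))"
  then have rc: "r < d1*d2" "c < d1*d2" by auto
  have e1: "r = a \<longleftrightarrow> r div d2 = a div d2 \<and> r mod d2 = a mod d2"
    by (metis div_mult_mod_eq)
  have e2: "c = b \<longleftrightarrow> c div d2 = b div d2 \<and> c mod d2 = b mod d2"
    by (metis div_mult_mod_eq)
  show "emat (d1*d2) a b $$ (r,c) = kron (emat d1 (a div d2) (b div d2)) (emat d2 (a mod d2) (b mod d2)) $$ (r,c)"
    using rc by (simp add: index_kron[OF emat_carrier emat_carrier] div_lt mod_lt e1 e2)
qed auto

lemma lin_map_dims: "lin_map a b F \<Longrightarrow> a = a' \<Longrightarrow> b = b' \<Longrightarrow> lin_map a' b' F"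
  by simp

lemma lin_ext_kron: assumes "lin_map (d1*d2) m F" "lin_map (d1*d2) m G"
  "\<And>i j k l. i < d1 \<Longrightarrow> j < d1 \<Longrightarrow> k < d2 \<Longrightarrow> l < d2 \<Longrightarrow>
      F (kron (emat d1 i j) (emat d2 k l)) = G (kron (emat d1 i j) (emat d2 k l))"
  "M \<in> carrier_mat (d1*d2) (d1*d2)" shows "F M = G M"
proof (rule lin_ext[OF assms(1,2) _ assms(4)])
  fix a b assume "a < d1*d2" "b < d1*d2"
  then show "F (emat (d1 * d2) a b) = G (emat (d1 * d2) a b)"
    by (simp add: emat_kron assms(3) div_lt mod_lt)
qed

lemma kron_add_left: "A \<in> carrier_mat a a \<Longrightarrow> A' \<in> carrier_mat a a \<Longrightarrow> B \<in> carrier_mat b b \<Longrightarrow>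
  kron (A + A') B = kron A B + kron A' B"
  by (rule eq_matI) (auto simp: index_kron[of _ a _ b] div_lt mod_lt distrib_right)
lemma kron_add_right: "A \<in> carrier_mat a a \<Longrightarrow> B \<in> carrier_mat b b \<Longrightarrow> B' \<in> carrier_mat b b \<Longrightarrow>
  kron A (B + B') = kron A B + kron A B'"
  by (rule eq_matI) (auto simp: index_kron[of _ a _ b] div_lt mod_lt distrib_left)
lemma kron_smult_left: "A \<in> carrier_mat a a \<Longrightarrow> B \<in> carrier_mat b b \<Longrightarrow>
  kron (x \<cdot>\<^sub>m A) B = x \<cdot>\<^sub>m kron A B"
  by (rule eq_matI) (auto simp: index_kron[of _ a _ b] div_lt mod_lt)
lemma kron_smult_right: "A \<in> carrier_mat a a \<Longrightarrow> B \<in> carrier_mat b b \<Longrightarrow>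
  kron A (x \<cdot>\<^sub>m B) = x \<cdot>\<^sub>m kron A B"
  by (rule eq_matI) (auto simp: index_kron[of _ a _ b] div_lt mod_lt)

lemma lin_map_kron_left: "B \<in> carrier_mat b b \<Longrightarrow> lin_map a (a*b) (\<lambda>A. kron A B)"
  unfolding lin_map_def by (auto simp: kron_add_left kron_smult_left)
lemma lin_map_kron_right: "A \<in> carrier_mat a a \<Longrightarrow> lin_map b (a*b) (\<lambda>B. kron A B)"
  unfolding lin_map_def by (auto simp: kron_add_right kron_smult_right)

lemma decomp4: assumes "r < d1*d3*d2*(d4::nat)"
  shows "\<exists>x1 x2 x3 x4. x1 < d1 \<and> x2 < d2 \<and> x3 < d3 \<and> x4 < d4 \<and> r = ((x1*d3+x3)*d2+x2)*d4+x4"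
proof -
  have pos: "d2 > 0" "d3 > 0" "d4 > 0" using assms by (auto intro!: gr0I)
  have "r div d4 < d1*d3*d2" using assms by (simp add: div_lt)
  then have "r div d4 div d2 < d1*d3" by (simp add: div_lt)
  then have "r div d4 div d2 div d3 < d1" by (simp add: div_lt)
  moreover have "r div d4 div d2 mod d3 < d3" "r div d4 mod d2 < d2" "r mod d4 < d4" using pos by auto
  moreover have "r = ((r div d4 div d2 div d3 * d3 + r div d4 div d2 mod d3) * d2 + r div d4 mod d2) * d4 + r mod d4"
    by simp
  ultimately show ?thesis by blast
qed

lemma swap_idx_param: assumes "x2 < d2" "x3 < d3" "x4 < (d4::nat)"
  shows "swap_idx d1 d2 d3 d4 (((x1*d3+x3)*d2+x2)*d4+x4) = ((x1*d2+x2)*d3+x3)*d4+x4"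
proof -
  let ?r = "((x1*d3+x3)*d2+x2)*d4+x4"
  have a: "?r mod d4 = x4" "?r div d4 = (x1*d3+x3)*d2+x2" using assms by simp_all
  have b: "?r div (d4*d2) = x1*d3+x3" using a assms by (simp add: div_mult2_eq)
  have c: "?r div (d4*d2*d3) = x1" using b assms by (simp add: div_mult2_eq[of ?r "d4*d2" d3])
  show ?thesis unfolding swap_idx_def Let_def using a b c assms by simp
qed

lemma swap_idx_lt: assumes "r < d1*d3*d2*d4" shows "swap_idx d1 d2 d3 d4 r < d1*d2*d3*d4"
proof -
  obtain x1 x2 x3 x4 where x: "x1 < d1" "x2 < d2" "x3 < d3" "x4 < d4" "r = ((x1*d3+x3)*d2+x2)*d4+x4"
    using decomp4[OF assms] by blast
  show ?thesis using x by (simp add: swap_idx_param idx_lt)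
qed

lemma swap_mid_carrier[simp]: "swap_mid d1 d2 d3 d4 M \<in> carrier_mat (d1*d3*d2*d4) (d1*d3*d2*d4)"
  by (simp add: swap_mid_def)

lemma lin_map_swap_mid: "lin_map (d1*d2*d3*d4) (d1*d3*d2*d4) (swap_mid d1 d2 d3 d4)"
  unfolding lin_map_def swap_mid_def
  by (auto intro!: eq_matI simp: swap_idx_lt)

lemma swap_mid_kron: assumes "A \<in> carrier_mat d1 d1" "B \<in> carrier_mat d2 d2" "C \<in> carrier_mat d3 d3" "D \<in> carrier_mat d4 d4"
  shows "swap_mid d1 d2 d3 d4 (kron (kron A B) (kron C D)) = kron (kron A C) (kron B D)"
proof (rule eq_matI)
  fix r c assume "r < dim_row (kron (kron A C) (kron B D))" "c < dim_col (kron (kron A C) (kron B D))"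
  then have "r < d1*d3*d2*d4" "c < d1*d3*d2*d4" using assms by (auto simp: mult.assoc)
  then obtain x1 x2 x3 x4 y1 y2 y3 y4 where x: "x1 < d1" "x2 < d2" "x3 < d3" "x4 < d4" "r = ((x1*d3+x3)*d2+x2)*d4+x4"
    and y: "y1 < d1" "y2 < d2" "y3 < d3" "y4 < d4" "c = ((y1*d3+y3)*d2+y2)*d4+y4"
    using decomp4 by meson
  have e1: "((x1*d2+x2)*d3+x3)*d4+x4 = (x1*d2+x2)*(d3*d4) + (x3*d4+x4)" for x1 x2 x3 x4 :: nat
    by (simp add: algebra_simps)
  have e2: "((x1*d3+x3)*d2+x2)*d4+x4 = (x1*d3+x3)*(d2*d4) + (x2*d4+x4)" for x1 x2 x3 x4 :: nat
    by (simp add: algebra_simps)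
  have "swap_mid d1 d2 d3 d4 (kron (kron A B) (kron C D)) $$ (r,c) = kron (kron A B) (kron C D) $$
     ((x1*d2+x2)*(d3*d4) + (x3*d4+x4), (y1*d2+y2)*(d3*d4) + (y3*d4+y4))"
    unfolding swap_mid_def using x y by (simp add: swap_idx_param e1 idx_lt)
  also have "\<dots> = A $$ (x1,y1) * B $$ (x2,y2) * (C $$ (x3,y3) * D $$ (x4,y4))"
    using x y assms by (simp add: index_kron2[of _ "d1*d2" _ "d3*d4"] idx_lt)
  also have "\<dots> = kron (kron A C) (kron B D) $$ (r,c)"
    unfolding x(5) y(5) e2 using x y assms by (simp add: index_kron2[of _ "d1*d3" _ "d2*d4"] idx_lt)
  finally show "swap_mid d1 d2 d3 d4 (kron (kron A B) (kron C D)) $$ (r,c) = kron (kron A C) (kron B D) $$ (r,c)" .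
qed (use assms in \<open>auto simp: swap_mid_def\<close>)

definition pc :: "nat \<Rightarrow> (nat \<Rightarrow> nat) \<Rightarrow> complex mat \<Rightarrow> complex mat" where
  "pc N \<sigma> M = mat N N (\<lambda>(r,c). M $$ (\<sigma> r, \<sigma> c))"

lemma pc_carrier[simp]: "pc N \<sigma> M \<in> carrier_mat N N"
  by (simp add: pc_def)
lemma dim_pc[simp]: "dim_row (pc N \<sigma> M) = N" "dim_col (pc N \<sigma> M) = N"
  by (simp_all add: pc_def)

lemma quad_form: assumes "A \<in> carrier_mat n n" "v \<in> carrier_vec n"
  shows "conjugate v \<bullet> (A *\<^sub>v v) = (\<Sum>i<n. conjugate (v $ i) * (\<Sum>j<n. A $$ (i,j) * v $ j))"
  using assms by (simp add: scalar_prod_def mult_mat_vec_def row_def atLeast0LessThan mult.commute)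

lemma bij_from_inj: assumes "\<sigma> ` {..<N} \<subseteq> {..<N}" "inj_on \<sigma> {..<(N::nat)}"
  shows "bij_betw \<sigma> {..<N} {..<N}"
  using assms by (simp add: bij_betw_def endo_inj_surj)

lemma psd_pc: assumes "\<sigma> ` {..<N} \<subseteq> {..<N}" "inj_on \<sigma> {..<N}" "psd N M"
  shows "psd N (pc N \<sigma> M)"
  unfolding psd_def
proof (intro conjI ballI)
  show "pc N \<sigma> M \<in> carrier_mat N N" by simp
  fix v :: "complex vec" assume v: "v \<in> carrier_vec N"
  have bij: "bij_betw \<sigma> {..<N} {..<N}" using bij_from_inj assms by blast
  define \<tau> where "\<tau> = inv_into {..<N} \<sigma>"
  have \<tau>\<sigma>: "\<tau> (\<sigma> r) = r" if "r < N" for r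
    unfolding \<tau>_def using assms(2) that by (simp add: inv_into_f_f)
  define w where "w = vec N (\<lambda>a. v $ (\<tau> a))"
  have w: "w \<in> carrier_vec N" by (simp add: w_def)
  have M: "M \<in> carrier_mat N N" using assms(3) by (simp add: psd_def)
  have s: "\<sigma> r < N" if "r < N" for r using assms(1) that by auto
  have "0 \<le> conjugate w \<bullet> (M *\<^sub>v w)" using assms(3) w by (simp add: psd_def)
  also have "conjugate w \<bullet> (M *\<^sub>v w) = (\<Sum>a<N. conjugate (w $ a) * (\<Sum>b<N. M $$ (a,b) * w $ b))"
    by (rule quad_form[OF M w])
  also have "\<dots> = (\<Sum>r<N. conjugate (w $ \<sigma> r) * (\<Sum>c<N. M $$ (\<sigma> r, \<sigma> c) * w $ \<sigma> c))"
    using sum.reindex_bij_betw[OF bij, symmetric] by (simp add: sum.reindex_bij_betw[OF bij, of "\<lambda>b. M $$ (_, b) * w $ b", symmetric])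
  also have "\<dots> = (\<Sum>r<N. conjugate (v $ r) * (\<Sum>c<N. pc N \<sigma> M $$ (r, c) * v $ c))"
    by (rule sum.cong[OF refl]) (auto simp: w_def s \<tau>\<sigma> pc_def intro!: sum.cong)
  also have "\<dots> = conjugate v \<bullet> (pc N \<sigma> M *\<^sub>v v)"
    by (rule quad_form[symmetric]) (use v in auto)
  finally show "0 \<le> conjugate v \<bullet> (pc N \<sigma> M *\<^sub>v v)" .
qed

lemma lin_map_pc: assumes "\<sigma> ` {..<N} \<subseteq> {..<N}" shows "lin_map N N (pc N \<sigma>)"
proof -
  have s: "\<And>i. i < N \<Longrightarrow> \<sigma> i < N" using assms by auto
  show ?thesis unfolding lin_map_def pc_def using s by (auto intro!: eq_matI)
qed

lemma trace_pc: assumes "\<sigma> ` {..<N} \<subseteq> {..<N}" "inj_on \<sigma> {..<N}" "M \<in> carrier_mat N N"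
  shows "trace (pc N \<sigma> M) = trace M"
proof -
  have bij: "bij_betw \<sigma> {..<N} {..<N}" using bij_from_inj assms by blast
  have "trace (pc N \<sigma> M) = (\<Sum>r<N. M $$ (\<sigma> r, \<sigma> r))" using assms(1)
    by (simp add: trace_def pc_def)
  also have "\<dots> = (\<Sum>r<N. M $$ (r, r))" by (rule sum.reindex_bij_betw[OF bij])
  finally show ?thesis using assms(3) by (simp add: trace_def)
qed

lemma ampl_carrier[simp]: "ampl k din dout \<Phi> M \<in> carrier_mat (k*dout) (k*dout)"
  by (simp add: ampl_def)

lemma ampl_pc: assumes "\<sigma> ` {..<N} \<subseteq> {..<N}"
  shows "ampl k N N (pc N \<sigma>) M = pc (k*N) (\<lambda>r. (r div N)*N + \<sigma> (r mod N)) M"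
proof (rule eq_matI)
  fix r c assume "r < dim_row (pc (k*N) (\<lambda>r. (r div N)*N + \<sigma> (r mod N)) M)" "c < dim_col (pc (k*N) (\<lambda>r. (r div N)*N + \<sigma> (r mod N)) M)"
  then have rc: "r < k*N" "c < k*N" by auto
  have s: "\<sigma> (r mod N) < N" "\<sigma> (c mod N) < N" using assms mod_lt[OF rc(1)] mod_lt[OF rc(2)] by (auto simp: image_subset_iff)
  show "ampl k N N (pc N \<sigma>) M $$ (r,c) = pc (k*N) (\<lambda>r. (r div N)*N + \<sigma> (r mod N)) M $$ (r,c)"
    using rc s mod_lt[OF rc(1)] mod_lt[OF rc(2)] by (simp add: ampl_def pc_def)
qed (auto simp: ampl_def pc_def)

lemma pc_ampl_inj: fixes \<sigma> :: "nat \<Rightarrow> nat" assumes "\<sigma> ` {..<N} \<subseteq> {..<N}" "inj_on \<sigma> {..<N}"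
  shows "(\<lambda>r. (r div N)*N + \<sigma> (r mod N)) ` {..<k*N} \<subseteq> {..<k*N}"
    "inj_on (\<lambda>r. (r div N)*N + \<sigma> (r mod N)) {..<k*N}"
proof -
  show "(\<lambda>r. (r div N)*N + \<sigma> (r mod N)) ` {..<k*N} \<subseteq> {..<k*N}"
  proof
    fix x assume "x \<in> (\<lambda>r. (r div N)*N + \<sigma> (r mod N)) ` {..<k*N}"
    then obtain r where r: "r < k*N" "x = (r div N)*N + \<sigma> (r mod N)" by auto
    have "\<sigma> (r mod N) < N" using assms(1) mod_lt[OF r(1)] by auto
    then show "x \<in> {..<k*N}" using r div_lt[OF r(1)] by (simp add: idx_lt)
  qed
  show "inj_on (\<lambda>r. (r div N)*N + \<sigma> (r mod N)) {..<k*N}"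
  proof (rule inj_onI)
    fix r s assume r: "r \<in> {..<k*N}" and s: "s \<in> {..<k*N}" and e: "r div N * N + \<sigma> (r mod N) = s div N * N + \<sigma> (s mod N)"
    have rs: "r < k*N" "s < k*N" using r s by auto
    have a: "\<sigma> (r mod N) < N" "\<sigma> (s mod N) < N" using assms(1) mod_lt[OF rs(1)] mod_lt[OF rs(2)] by (auto simp: image_subset_iff)
    have "r div N = s div N" using arg_cong[OF e, of "\<lambda>x. x div N"] a by simp
    moreover have "\<sigma> (r mod N) = \<sigma> (s mod N)" using arg_cong[OF e, of "\<lambda>x. x mod N"] a by simp
    then have "r mod N = s mod N" using assms(2) mod_lt[OF rs(1)] mod_lt[OF rs(2)] by (auto dest: inj_onD)
    ultimately show "r = s" by (metis div_mult_mod_eq)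
  qed
qed

lemma channel_pc: assumes "\<sigma> ` {..<N} \<subseteq> {..<N}" "inj_on \<sigma> {..<N}"
  shows "channel N N (pc N \<sigma>)"
  unfolding channel_def
proof (intro conjI)
  show "lin_map N N (pc N \<sigma>)" using lin_map_pc[OF assms(1)] .
  show "trace_pres N (pc N \<sigma>)" unfolding trace_pres_def using trace_pc[OF assms] by blast
  show "compl_pos N N (pc N \<sigma>)" unfolding compl_pos_def
    using ampl_pc[OF assms(1)] psd_pc[OF pc_ampl_inj[OF assms]] by simp
qed

lemma lin_map_ampl: assumes "lin_map din dout \<Phi>" shows "lin_map (k*din) (k*dout) (ampl k din dout \<Phi>)"
  unfolding lin_map_def
proof (intro conjI ballI allI)
  fix M N :: "complex mat" assume M: "M \<in> carrier_mat (k*din) (k*din)" and N: "N \<in> carrier_mat (k*din) (k*din)"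
  show "ampl k din dout \<Phi> (M + N) = ampl k din dout \<Phi> M + ampl k din dout \<Phi> N"
  proof (rule eq_matI)
    fix r c assume "r < dim_row (ampl k din dout \<Phi> M + ampl k din dout \<Phi> N)" "c < dim_col (ampl k din dout \<Phi> M + ampl k din dout \<Phi> N)"
    then have rc: "r < k*dout" "c < k*dout" by (auto simp: ampl_def)
    let ?b = "\<lambda>M. mat din din (\<lambda>(i,j). M $$ ((r div dout)*din + i, (c div dout)*din + j))"
    have "?b (M + N) = ?b M + ?b N"
      using M N div_lt[OF rc(1)] div_lt[OF rc(2)] by (auto intro!: eq_matI simp: idx_lt)
    then have "\<Phi> (?b (M + N)) = \<Phi> (?b M) + \<Phi> (?b N)" using lin_mapD(2)[OF assms] by simp
    moreover have "\<Phi> (?b M) \<in> carrier_mat dout dout" "\<Phi> (?b N) \<in> carrier_mat dout dout" using lin_mapD(1)[OF assms] by auto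
    ultimately show "ampl k din dout \<Phi> (M + N) $$ (r,c) = (ampl k din dout \<Phi> M + ampl k din dout \<Phi> N) $$ (r,c)"
      using rc mod_lt[OF rc(1)] mod_lt[OF rc(2)] by (simp add: ampl_def)
  qed (auto simp: ampl_def)
next
  fix M :: "complex mat" and x assume M: "M \<in> carrier_mat (k*din) (k*din)"
  show "ampl k din dout \<Phi> (x \<cdot>\<^sub>m M) = x \<cdot>\<^sub>m ampl k din dout \<Phi> M"
  proof (rule eq_matI)
    fix r c assume "r < dim_row (x \<cdot>\<^sub>m ampl k din dout \<Phi> M)" "c < dim_col (x \<cdot>\<^sub>m ampl k din dout \<Phi> M)"
    then have rc: "r < k*dout" "c < k*dout" by (auto simp: ampl_def)
    let ?b = "\<lambda>M. mat din din (\<lambda>(i,j). M $$ ((r div dout)*din + i, (c div dout)*din + j))"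
    have "?b (x \<cdot>\<^sub>m M) = x \<cdot>\<^sub>m ?b M"
      using M div_lt[OF rc(1)] div_lt[OF rc(2)] by (auto intro!: eq_matI simp: idx_lt)
    then have "\<Phi> (?b (x \<cdot>\<^sub>m M)) = x \<cdot>\<^sub>m \<Phi> (?b M)" using lin_mapD(3)[OF assms] by simp
    moreover have "\<Phi> (?b M) \<in> carrier_mat dout dout" using lin_mapD(1)[OF assms] by auto
    ultimately show "ampl k din dout \<Phi> (x \<cdot>\<^sub>m M) $$ (r,c) = (x \<cdot>\<^sub>m ampl k din dout \<Phi> M) $$ (r,c)"
      using rc mod_lt[OF rc(1)] mod_lt[OF rc(2)] by (simp add: ampl_def)
  qed (auto simp: ampl_def)
qed simp

lemma ampl_comp: assumes "lin_map a b F"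
  shows "ampl k a c (\<lambda>M. G (F M)) M = ampl k b c G (ampl k a b F M)"
proof (rule eq_matI)
  fix r s assume "r < dim_row (ampl k b c G (ampl k a b F M))" "s < dim_col (ampl k b c G (ampl k a b F M))"
  then have rs: "r < k*c" "s < k*c" by (auto simp: ampl_def)
  let ?b = "mat a a (\<lambda>(i,j). M $$ ((r div c)*a + i, (s div c)*a + j))"
  have "mat b b (\<lambda>(i,j). ampl k a b F M $$ ((r div c)*b + i, (s div c)*b + j)) = F ?b"
  proof (rule eq_matI)
    have Fb: "F ?b \<in> carrier_mat b b" using lin_mapD(1)[OF assms] by simp
    then show "dim_row (mat b b (\<lambda>(i,j). ampl k a b F M $$ ((r div c)*b + i, (s div c)*b + j))) = dim_row (F ?b)"
      "dim_col (mat b b (\<lambda>(i,j). ampl k a b F M $$ ((r div c)*b + i, (s div c)*b + j))) = dim_col (F ?b)" by auto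
    fix i j assume "i < dim_row (F ?b)" "j < dim_col (F ?b)"
    then have ij: "i < b" "j < b" using Fb by auto
    show "mat b b (\<lambda>(i,j). ampl k a b F M $$ ((r div c)*b + i, (s div c)*b + j)) $$ (i,j) = F ?b $$ (i,j)"
      using ij div_lt[OF rs(1)] div_lt[OF rs(2)] by (simp add: ampl_def idx_lt)
  qed
  then show "ampl k a c (\<lambda>M. G (F M)) M $$ (r,s) = ampl k b c G (ampl k a b F M) $$ (r,s)"
    using rs by (simp add: ampl_def)
qed (auto simp: ampl_def)

lemma trace_ampl: assumes "lin_map a b F" "trace_pres a F" "M \<in> carrier_mat (k*a) (k*a)"
  shows "trace (ampl k a b F M) = trace M"
proof -
  let ?b = "\<lambda>x. mat a a (\<lambda>(i,j). M $$ (x*a + i, x*a + j))"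
  have "trace (ampl k a b F M) = (\<Sum>r<k*b. F (?b (r div b)) $$ (r mod b, r mod b))"
    by (simp add: trace_def ampl_def)
  also have "\<dots> = (\<Sum>x<k. \<Sum>y<b. F (?b x) $$ (y,y))" by (simp add: sum_split)
  also have "\<dots> = (\<Sum>x<k. trace (?b x))"
  proof (rule sum.cong[OF refl])
    fix x have "F (?b x) \<in> carrier_mat b b" using lin_mapD(1)[OF assms(1)] by simp
    then have "(\<Sum>y<b. F (?b x) $$ (y,y)) = trace (F (?b x))" by (simp add: trace_def)
    also have "\<dots> = trace (?b x)" using assms(2) by (simp add: trace_pres_def)
    finally show "(\<Sum>y<b. F (?b x) $$ (y,y)) = trace (?b x)" .
  qed
  also have "\<dots> = (\<Sum>x<k. \<Sum>i<a. M $$ (x*a+i, x*a+i))" by (simp add: trace_def)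
  also have "\<dots> = trace M" using assms(3) by (simp add: trace_def sum_split)
  finally show ?thesis .
qed

lemma arith_ampl: assumes "r < k*(m*(b::nat))"
  shows "(r div (m*b))*(m*a) + ((r mod (m*b)) div b)*a = (r div b)*a"
    "(r mod (m*b)) mod b = r mod b"
proof -
  have b: "b > 0" using assms by (auto intro!: gr0I)
  have e1: "r div (m*b) = r div b div m" by (simp add: div_mult2_eq mult.commute)
  have e2: "r mod (m*b) = b * (r div b mod m) + r mod b" by (simp add: mod_mult2_eq mult.commute)
  have e3: "r mod (m*b) div b = r div b mod m" unfolding e2 using b by simp
  have "r div b = (r div (m*b))*m + (r mod (m*b)) div b" unfolding e1 e3 by simp
  then show "(r div (m*b))*(m*a) + ((r mod (m*b)) div b)*a = (r div b)*a" by (simp add: algebra_simps)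
  show "(r mod (m*b)) mod b = r mod b" by (simp add: mod_mod_cancel)
qed

lemma ampl_ampl: "ampl k (m*a) (m*b) (ampl m a b F) M = ampl (k*m) a b F M"
proof (rule eq_matI)
  fix r c assume "r < dim_row (ampl (k*m) a b F M)" "c < dim_col (ampl (k*m) a b F M)"
  then have rc: "r < k*(m*b)" "c < k*(m*b)" by (auto simp: ampl_def mult.assoc)
  have lt: "r mod (m*b) < m*b" "c mod (m*b) < m*b" using mod_lt[OF rc(1)] mod_lt[OF rc(2)] .
  have lt2: "r mod (m*b) div b < m" "c mod (m*b) div b < m" using div_lt[OF lt(1)] div_lt[OF lt(2)] .
  have inner: "mat a a (\<lambda>(i,j). mat (m*a) (m*a) (\<lambda>(i,j). M $$ ((r div (m*b))*(m*a) + i, (c div (m*b))*(m*a) + j))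
        $$ ((r mod (m*b) div b)*a + i, (c mod (m*b) div b)*a + j))
      = mat a a (\<lambda>(i,j). M $$ ((r div b)*a + i, (c div b)*a + j))"
    by (rule eq_matI) (use lt2 arith_ampl(1)[OF rc(1), of a] arith_ampl(1)[OF rc(2), of a] arith_ampl(2)[OF rc(1)] arith_ampl(2)[OF rc(2)] in \<open>auto simp: idx_lt add.assoc[symmetric]\<close>)
  show "ampl k (m*a) (m*b) (ampl m a b F) M $$ (r,c) = ampl (k*m) a b F M $$ (r,c)"
    using rc lt inner arith_ampl(1)[OF rc(1), of a] arith_ampl(1)[OF rc(2), of a] arith_ampl(2)[OF rc(1)] arith_ampl(2)[OF rc(2)] by (simp add: ampl_def mult.assoc)
qed (auto simp: ampl_def mult.assoc)

lemma channel_comp: assumes "channel a b F" "channel b c G" shows "channel a c (\<lambda>M. G (F M))"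
  unfolding channel_def
proof (intro conjI)
  have lF: "lin_map a b F" and lG: "lin_map b c G" using assms by (auto simp: channel_def)
  show "lin_map a c (\<lambda>M. G (F M))" using lin_map_comp[OF lF lG] .
  show "trace_pres a (\<lambda>M. G (F M))" using assms lin_mapD(1)[OF lF]
    by (auto simp: channel_def trace_pres_def)
  show "compl_pos a c (\<lambda>M. G (F M))" using assms
    by (auto simp: channel_def compl_pos_def ampl_comp[OF lF])
qed

lemma channel_ampl: assumes "channel a b F" shows "channel (m*a) (m*b) (ampl m a b F)"
  unfolding channel_def
proof (intro conjI)
  have lF: "lin_map a b F" using assms by (auto simp: channel_def)
  show "lin_map (m*a) (m*b) (ampl m a b F)" using lin_map_ampl[OF lF] .
  show "trace_pres (m*a) (ampl m a b F)" using assms trace_ampl[OF lF]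
    by (auto simp: channel_def trace_pres_def)
  show "compl_pos (m*a) (m*b) (ampl m a b F)" unfolding compl_pos_def
  proof (intro allI impI)
    fix k M assume "psd (k * (m * a)) M"
    then have "psd ((k*m) * a) M" by (simp add: mult.assoc)
    then have "psd ((k*m) * b) (ampl (k*m) a b F M)" using assms by (auto simp: channel_def compl_pos_def)
    then show "psd (k * (m * b)) (ampl k (m * a) (m * b) (ampl m a b F) M)" by (simp add: ampl_ampl mult.assoc)
  qed
qed

lemma ampl_cong: "(\<And>M. M \<in> carrier_mat din din \<Longrightarrow> F M = G M) \<Longrightarrow> ampl k din dout F M = ampl k din dout G M"
  unfolding ampl_def by simp

lemma channel_cong: assumes "channel a b F" "\<And>M. M \<in> carrier_mat a a \<Longrightarrow> F M = G M"
  shows "channel a b G"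
  using assms unfolding channel_def lin_map_def trace_pres_def compl_pos_def
  by (simp add: ampl_cong[of a F G])

lemma channel_dims: "channel a b F \<Longrightarrow> a = a' \<Longrightarrow> b = b' \<Longrightarrow> channel a' b' F"
  by simp

definition sw :: "nat \<Rightarrow> nat \<Rightarrow> nat \<Rightarrow> nat" where
  "sw d1 d2 r = (r mod d1)*d2 + r div d1"

lemma sw_props: "sw d1 d2 ` {..<d1*d2} \<subseteq> {..<d1*d2}" "inj_on (sw d1 d2) {..<d1*d2}"
proof -
  show "sw d1 d2 ` {..<d1*d2} \<subseteq> {..<d1*d2}"
  proof
    fix x assume "x \<in> sw d1 d2 ` {..<d1*d2}"
    then obtain r where r: "r < d1*d2" "x = sw d1 d2 r" by auto
    have "r < d2*d1" using r by (simp add: mult.commute)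
    then show "x \<in> {..<d1*d2}" using r mod_lt div_lt by (auto simp: sw_def idx_lt)
  qed
  show "inj_on (sw d1 d2) {..<d1*d2}"
  proof (rule inj_onI)
    fix r s assume r: "r \<in> {..<d1*d2}" and s: "s \<in> {..<d1*d2}" and e: "sw d1 d2 r = sw d1 d2 s"
    have "r < d2*d1" "s < d2*d1" using r s by (auto simp: mult.commute)
    then have a: "r div d1 < d2" "s div d1 < d2" using div_lt by auto
    have "r div d1 = s div d1" using arg_cong[OF e, of "\<lambda>x. x mod d2"] a by (simp add: sw_def)
    moreover have "r mod d1 = s mod d1" using arg_cong[OF e, of "\<lambda>x. x div d2"] a by (simp add: sw_def)
    ultimately show "r = s" by (metis div_mult_mod_eq)
  qed
qed

lemma pc_sw_kron: assumes "A \<in> carrier_mat d1 d1" "B \<in> carrier_mat d2 d2"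
  shows "pc (d1*d2) (sw d1 d2) (kron A B) = kron B A"
proof (rule eq_matI)
  fix r c assume "r < dim_row (kron B A)" "c < dim_col (kron B A)"
  then have rc: "r < d2*d1" "c < d2*d1" using assms by auto
  have "pc (d1*d2) (sw d1 d2) (kron A B) $$ (r,c) = kron A B $$ ((r mod d1)*d2 + r div d1, (c mod d1)*d2 + c div d1)"
    using rc by (simp add: pc_def sw_def mult.commute)
  also have "\<dots> = A $$ (r mod d1, c mod d1) * B $$ (r div d1, c div d1)"
    using rc assms by (simp add: mod_lt div_lt)
  also have "\<dots> = kron B A $$ (r,c)" using rc assms by (simp add: index_kron)
  finally show "pc (d1*d2) (sw d1 d2) (kron A B) $$ (r,c) = kron B A $$ (r,c)" .
qed (use assms in \<open>auto simp: mult.commute\<close>)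

lemma ampl_kron: assumes "lin_map a b F" "B \<in> carrier_mat k k" "A \<in> carrier_mat a a"
  shows "ampl k a b F (kron B A) = kron B (F A)"
proof (rule eq_matI)
  have FA: "F A \<in> carrier_mat b b" using lin_mapD(1)[OF assms(1) assms(3)] .
  fix r c assume "r < dim_row (kron B (F A))" "c < dim_col (kron B (F A))"
  then have rc: "r < k*b" "c < k*b" using assms FA by auto
  have "mat a a (\<lambda>(i,j). kron B A $$ ((r div b)*a + i, (c div b)*a + j)) = B $$ (r div b, c div b) \<cdot>\<^sub>m A"
    by (rule eq_matI) (use rc assms in \<open>auto simp: div_lt\<close>)
  then show "ampl k a b F (kron B A) $$ (r,c) = kron B (F A) $$ (r,c)"
    using rc FA assms lin_mapD(3)[OF assms(1) assms(3)] by (simp add: ampl_def index_kron mod_lt)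
qed (use assms lin_mapD(1)[OF assms(1) assms(3)] in \<open>auto simp: ampl_def\<close>)

lemma lin_map_id: "lin_map n n (\<lambda>N. N)"
  by (simp add: lin_map_def)

lemma RAI_eq: assumes "lin_map dX dA RA" "M \<in> carrier_mat (dX*m) (dX*m)"
  shows "map_tensor dX m dA m RA (\<lambda>N. N) M = pc (m*dA) (sw m dA) (ampl m dX dA RA (pc (dX*m) (sw dX m) M))"
proof (rule lin_ext_kron[where F="map_tensor dX m dA m RA (\<lambda>N. N)", OF _ _ _ assms(2)])
  show "lin_map (dX*m) (dA*m) (map_tensor dX m dA m RA (\<lambda>N. N))" by (rule lin_map_map_tensor)
  have l1: "lin_map (dX*m) (m*dX) (pc (dX*m) (sw dX m))"
    using lin_map_pc[OF sw_props(1)] by (rule lin_map_dims) (simp_all add: mult.commute)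
  have l2: "lin_map (m*dX) (m*dA) (ampl m dX dA RA)" by (rule lin_map_ampl[OF assms(1)])
  have l3: "lin_map (m*dA) (dA*m) (pc (m*dA) (sw m dA))"
    using lin_map_pc[OF sw_props(1)] by (rule lin_map_dims) (simp_all add: mult.commute)
  show "lin_map (dX*m) (dA*m) (\<lambda>M. pc (m*dA) (sw m dA) (ampl m dX dA RA (pc (dX*m) (sw dX m) M)))"
    using lin_map_comp[OF lin_map_comp[OF l1 l2] l3] .
  fix i j k l assume "i < dX" "j < dX" "k < m" "l < m"
  have Re: "RA (emat dX i j) \<in> carrier_mat dA dA" using lin_mapD(1)[OF assms(1)] by simp
  show "map_tensor dX m dA m RA (\<lambda>N. N) (kron (emat dX i j) (emat m k l)) =
        pc (m*dA) (sw m dA) (ampl m dX dA RA (pc (dX*m) (sw dX m) (kron (emat dX i j) (emat m k l))))"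
    by (simp add: map_tensor_kron[OF assms(1) lin_map_id] pc_sw_kron ampl_kron[OF assms(1)] pc_sw_kron[OF emat_carrier Re])
qed

lemma channel_RAI: assumes "channel dX dA RA"
  shows "channel (dX*m) (dA*m) (map_tensor dX m dA m RA (\<lambda>N. N))"
proof -
  have lR: "lin_map dX dA RA" using assms by (simp add: channel_def)
  have c1: "channel (dX*m) (m*dX) (pc (dX*m) (sw dX m))"
    using channel_pc[OF sw_props] by (rule channel_dims) (simp_all add: mult.commute)
  have c2: "channel (m*dX) (m*dA) (ampl m dX dA RA)" by (rule channel_ampl[OF assms])
  have c3: "channel (m*dA) (dA*m) (pc (m*dA) (sw m dA))"
    using channel_pc[OF sw_props] by (rule channel_dims) (simp_all add: mult.commute)
  show ?thesis
    by (rule channel_cong[OF channel_comp[OF channel_comp[OF c1 c2] c3]]) (simp add: RAI_eq[OF lR])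
qed

definition chain :: "nat \<Rightarrow> nat \<Rightarrow> nat \<Rightarrow> nat \<Rightarrow> nat \<Rightarrow> nat \<Rightarrow> nat \<Rightarrow> nat \<Rightarrow> cmap \<Rightarrow> cmap \<Rightarrow> cmap \<Rightarrow> cmap" where
  "chain dX dY dA dB mA mB dA' dB' R EA EB M =
     map_tensor (dA*mA) (dB*mB) dA' dB' EA EB
       (swap_mid dA dB mA mB
         (map_tensor (dX*dY) (mA*mB) (dA*dB) (mA*mB) R (\<lambda>N. N)
           (swap_mid dX mA dY mB M)))"

lemma lin_map_chain: "lin_map (dX*mA*(dY*mB)) (dA'*dB') (chain dX dY dA dB mA mB dA' dB' R EA EB)"
proof -
  have l1: "lin_map (dX*mA*(dY*mB)) (dX*dY*(mA*mB)) (swap_mid dX mA dY mB)"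
    using lin_map_swap_mid by (rule lin_map_dims) (simp_all add: mult_ac)
  have l2: "lin_map (dX*dY*(mA*mB)) (dA*dB*mA*mB) (map_tensor (dX*dY) (mA*mB) (dA*dB) (mA*mB) R (\<lambda>N. N))"
    using lin_map_map_tensor by (rule lin_map_dims) (simp_all add: mult_ac)
  have l3: "lin_map (dA*dB*mA*mB) (dA*mA*(dB*mB)) (swap_mid dA dB mA mB)"
    using lin_map_swap_mid by (rule lin_map_dims) (simp_all add: mult_ac)
  have l4: "lin_map (dA*mA*(dB*mB)) (dA'*dB') (map_tensor (dA*mA) (dB*mB) dA' dB' EA EB)"
    by (rule lin_map_map_tensor)
  show ?thesis unfolding chain_def[abs_def]
    using lin_map_comp[OF lin_map_comp[OF lin_map_comp[OF l1 l2] l3] l4] .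
qed

lemma chain_kron4:
  assumes lRA: "lin_map dX dA RA" and lRB: "lin_map dY dB RB"
    and lEA: "lin_map (dA*mA) dA' EA" and lEB: "lin_map (dB*mB) dB' EB"
    and a: "a \<in> carrier_mat dX dX" and b: "b \<in> carrier_mat dY dY"
    and c: "c \<in> carrier_mat mA mA" and d: "d \<in> carrier_mat mB mB"
  shows "chain dX dY dA dB mA mB dA' dB' (map_tensor dX dY dA dB RA RB) EA EB (kron (kron a c) (kron b d)) =
         kron (EA (map_tensor dX mA dA mA RA (\<lambda>N. N) (kron a c))) (EB (map_tensor dY mB dB mB RB (\<lambda>N. N) (kron b d)))"
proof -
  have Ra: "RA a \<in> carrier_mat dA dA" using lin_mapD(1)[OF lRA a] .
  have Rb: "RB b \<in> carrier_mat dB dB" using lin_mapD(1)[OF lRB b] .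
  have "chain dX dY dA dB mA mB dA' dB' (map_tensor dX dY dA dB RA RB) EA EB (kron (kron a c) (kron b d))
     = map_tensor (dA*mA) (dB*mB) dA' dB' EA EB
       (swap_mid dA dB mA mB
         (map_tensor (dX*dY) (mA*mB) (dA*dB) (mA*mB) (map_tensor dX dY dA dB RA RB) (\<lambda>N. N)
           (kron (kron a b) (kron c d))))"
    unfolding chain_def using swap_mid_kron[OF a c b d] by simp
  also have "\<dots> = map_tensor (dA*mA) (dB*mB) dA' dB' EA EB
       (swap_mid dA dB mA mB (kron (kron (RA a) (RB b)) (kron c d)))"
    using map_tensor_kron[OF lin_map_map_tensor lin_map_id, of "kron a b" dX dY "kron c d" "mA*mB" dA dB RA RB] a b c d
      map_tensor_kron[OF lRA lRB a b] by simp
  also have "\<dots> = map_tensor (dA*mA) (dB*mB) dA' dB' EA EB (kron (kron (RA a) c) (kron (RB b) d))"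
    using swap_mid_kron[OF Ra Rb c d] by simp
  also have "\<dots> = kron (EA (kron (RA a) c)) (EB (kron (RB b) d))"
    using map_tensor_kron[OF lEA lEB] Ra Rb c d by simp
  also have "\<dots> = kron (EA (map_tensor dX mA dA mA RA (\<lambda>N. N) (kron a c))) (EB (map_tensor dY mB dB mB RB (\<lambda>N. N) (kron b d)))"
    using map_tensor_kron[OF lRA lin_map_id a c] map_tensor_kron[OF lRB lin_map_id b d] by simp
  finally show ?thesis .
qed

lemma chain_kron:
  assumes lRA: "lin_map dX dA RA" and lRB: "lin_map dY dB RB"
    and lEA: "lin_map (dA*mA) dA' EA" and lEB: "lin_map (dB*mB) dB' EB"
    and P: "P \<in> carrier_mat (dX*mA) (dX*mA)" and Q: "Q \<in> carrier_mat (dY*mB) (dY*mB)"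
  shows "chain dX dY dA dB mA mB dA' dB' (map_tensor dX dY dA dB RA RB) EA EB (kron P Q) =
         kron (EA (map_tensor dX mA dA mA RA (\<lambda>N. N) P)) (EB (map_tensor dY mB dB mB RB (\<lambda>N. N) Q))"
proof -
  let ?C = "chain dX dY dA dB mA mB dA' dB' (map_tensor dX dY dA dB RA RB) EA EB"
  let ?RAI = "map_tensor dX mA dA mA RA (\<lambda>N. N)"
  let ?RBI = "map_tensor dY mB dB mB RB (\<lambda>N. N)"
  have lC: "lin_map (dX*mA*(dY*mB)) (dA'*dB') ?C" by (rule lin_map_chain)
  have lRAI: "lin_map (dX*mA) (dA*mA) ?RAI" by (rule lin_map_map_tensor)
  have lRBI: "lin_map (dY*mB) (dB*mB) ?RBI" by (rule lin_map_map_tensor)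
  have step1: "?C (kron (kron a c) Q) = kron (EA (?RAI (kron a c))) (EB (?RBI Q))"
    if a: "a \<in> carrier_mat dX dX" and c: "c \<in> carrier_mat mA mA" for a c
  proof -
    have Pac: "kron a c \<in> carrier_mat (dX*mA) (dX*mA)" using a c by simp
    have X: "EA (?RAI (kron a c)) \<in> carrier_mat dA' dA'" using lin_mapD(1)[OF lEA lin_mapD(1)[OF lRAI Pac]] .
    show ?thesis
    proof (rule lin_ext_kron[OF _ _ _ Q])
      show "lin_map (dY*mB) (dA'*dB') (\<lambda>Q. ?C (kron (kron a c) Q))"
        using lin_map_comp[OF lin_map_kron_right[OF Pac] lC] .
      show "lin_map (dY*mB) (dA'*dB') (\<lambda>Q. kron (EA (?RAI (kron a c))) (EB (?RBI Q)))"
        using lin_map_comp[OF lin_map_comp[OF lRBI lEB] lin_map_kron_right[OF X]] .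
      fix i j k l assume "i < dY" "j < dY" "k < mB" "l < mB"
      show "?C (kron (kron a c) (kron (emat dY i j) (emat mB k l))) =
            kron (EA (?RAI (kron a c))) (EB (?RBI (kron (emat dY i j) (emat mB k l))))"
        by (rule chain_kron4[OF lRA lRB lEA lEB a emat_carrier c emat_carrier])
    qed
  qed
  have Y: "EB (?RBI Q) \<in> carrier_mat dB' dB'" using lin_mapD(1)[OF lEB lin_mapD(1)[OF lRBI Q]] .
  show ?thesis
  proof (rule lin_ext_kron[OF _ _ _ P])
    show "lin_map (dX*mA) (dA'*dB') (\<lambda>P. ?C (kron P Q))"
      using lin_map_comp[OF lin_map_kron_left[OF Q] lC] .
    show "lin_map (dX*mA) (dA'*dB') (\<lambda>P. kron (EA (?RAI P)) (EB (?RBI Q)))"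
      using lin_map_comp[OF lin_map_comp[OF lRAI lEA] lin_map_kron_left[OF Y]] .
    fix i j k l assume "i < dX" "j < dX" "k < mA" "l < mA"
    show "?C (kron (kron (emat dX i j) (emat mA k l)) Q) = kron (EA (?RAI (kron (emat dX i j) (emat mA k l)))) (EB (?RBI Q))"
      by (rule step1) simp_all
  qed
qed

lemma chain_tensor:
  assumes lRA: "lin_map dX dA RA" and lRB: "lin_map dY dB RB"
    and lEA: "lin_map (dA*mA) dA' EA" and lEB: "lin_map (dB*mB) dB' EB"
    and lPA: "lin_map dX' (dX*mA) PA" and lPB: "lin_map dY' (dY*mB) PB"
    and M: "M \<in> carrier_mat (dX'*dY') (dX'*dY')"
  shows "chain dX dY dA dB mA mB dA' dB' (map_tensor dX dY dA dB RA RB) EA EB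
            (map_tensor dX' dY' (dX*mA) (dY*mB) PA PB M) =
         map_tensor dX' dY' dA' dB' (\<lambda>\<rho>. EA (map_tensor dX mA dA mA RA (\<lambda>N. N) (PA \<rho>)))
            (\<lambda>\<rho>. EB (map_tensor dY mB dB mB RB (\<lambda>N. N) (PB \<rho>))) M"
proof (rule lin_ext_kron[OF _ _ _ M])
  let ?C = "chain dX dY dA dB mA mB dA' dB' (map_tensor dX dY dA dB RA RB) EA EB"
  let ?RAI = "map_tensor dX mA dA mA RA (\<lambda>N. N)"
  let ?RBI = "map_tensor dY mB dB mB RB (\<lambda>N. N)"
  have lCA: "lin_map dX' dA' (\<lambda>\<rho>. EA (?RAI (PA \<rho>)))"
    using lin_map_comp[OF lin_map_comp[OF lPA lin_map_map_tensor] lEA] .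
  have lCB: "lin_map dY' dB' (\<lambda>\<rho>. EB (?RBI (PB \<rho>)))"
    using lin_map_comp[OF lin_map_comp[OF lPB lin_map_map_tensor] lEB] .
  show "lin_map (dX'*dY') (dA'*dB') (\<lambda>M. ?C (map_tensor dX' dY' (dX*mA) (dY*mB) PA PB M))"
    using lin_map_comp[OF lin_map_map_tensor lin_map_chain] .
  show "lin_map (dX'*dY') (dA'*dB') (map_tensor dX' dY' dA' dB' (\<lambda>\<rho>. EA (?RAI (PA \<rho>))) (\<lambda>\<rho>. EB (?RBI (PB \<rho>))))"
    by (rule lin_map_map_tensor)
  fix i j k l assume "i < dX'" "j < dX'" "k < dY'" "l < dY'"
  have P: "PA (emat dX' i j) \<in> carrier_mat (dX*mA) (dX*mA)" using lin_mapD(1)[OF lPA] by simp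
  have Q: "PB (emat dY' k l) \<in> carrier_mat (dY*mB) (dY*mB)" using lin_mapD(1)[OF lPB] by simp
  show "?C (map_tensor dX' dY' (dX*mA) (dY*mB) PA PB (kron (emat dX' i j) (emat dY' k l))) =
        map_tensor dX' dY' dA' dB' (\<lambda>\<rho>. EA (?RAI (PA \<rho>))) (\<lambda>\<rho>. EB (?RBI (PB \<rho>))) (kron (emat dX' i j) (emat dY' k l))"
    by (simp add: map_tensor_kron[OF lPA lPB] map_tensor_kron[OF lCA lCB] chain_kron[OF lRA lRB lEA lEB P Q])
qed

lemma chain_phi_msum:
  assumes "\<And>M. M \<in> carrier_mat (dX*dY) (dX*dY) \<Longrightarrow> R M = msum N (dA*dB) (\<lambda>i. q i \<cdot>\<^sub>m F i M)"
    "\<And>i M. M \<in> carrier_mat (dX*dY) (dX*dY) \<Longrightarrow> F i M \<in> carrier_mat (dA*dB) (dA*dB)"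
  shows "chain dX dY dA dB mA mB dA' dB' R EA EB X = msum N (dA'*dB') (\<lambda>i. q i \<cdot>\<^sub>m chain dX dY dA dB mA mB dA' dB' (F i) EA EB X)"
proof -
  let ?Y = "swap_mid dX mA dY mB X"
  have l3: "lin_map (dA*dB*(mA*mB)) (dA*mA*(dB*mB)) (swap_mid dA dB mA mB)"
    using lin_map_swap_mid by (rule lin_map_dims) (simp_all add: mult_ac)
  have l4: "lin_map (dA*mA*(dB*mB)) (dA'*dB') (map_tensor (dA*mA) (dB*mB) dA' dB' EA EB)"
    by (rule lin_map_map_tensor)
  have "map_tensor (dX*dY) (mA*mB) (dA*dB) (mA*mB) R (\<lambda>N. N) ?Y =
        msum N (dA*dB*(mA*mB)) (\<lambda>i. q i \<cdot>\<^sub>m map_tensor (dX*dY) (mA*mB) (dA*dB) (mA*mB) (F i) (\<lambda>N. N) ?Y)"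
    by (rule map_tensor_phi_msum) (use assms in auto)
  then show ?thesis unfolding chain_def
    by (simp add: lin_map_msum[OF l3] lin_map_msum[OF l4] lin_mapD(1)[OF l3])
qed

lemma msum_flatten:
  assumes "\<And>l i. l < n' \<Longrightarrow> i < n \<Longrightarrow> G l i \<in> carrier_mat D D"
  shows "msum n' D (\<lambda>l. complex_of_real (p' l) \<cdot>\<^sub>m msum n D (\<lambda>i. complex_of_real (p i) \<cdot>\<^sub>m G l i)) =
         msum (n'*n) D (\<lambda>k. complex_of_real (p' (k div n) * p (k mod n)) \<cdot>\<^sub>m G (k div n) (k mod n))"
proof (rule eq_matI)
  fix r c assume "r < dim_row (msum (n'*n) D (\<lambda>k. complex_of_real (p' (k div n) * p (k mod n)) \<cdot>\<^sub>m G (k div n) (k mod n)))"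
    "c < dim_col (msum (n'*n) D (\<lambda>k. complex_of_real (p' (k div n) * p (k mod n)) \<cdot>\<^sub>m G (k div n) (k mod n)))"
  then have rc: "r < D" "c < D" by auto
  have d: "dim_row (G l i) = D" "dim_col (G l i) = D" if "l < n'" "i < n" for l i using assms[OF that] by auto
  show "msum n' D (\<lambda>l. complex_of_real (p' l) \<cdot>\<^sub>m msum n D (\<lambda>i. complex_of_real (p i) \<cdot>\<^sub>m G l i)) $$ (r,c) =
         msum (n'*n) D (\<lambda>k. complex_of_real (p' (k div n) * p (k mod n)) \<cdot>\<^sub>m G (k div n) (k mod n)) $$ (r,c)"
    using rc d by (simp add: sum_split sum_distrib_left mult.assoc)
qed auto

lemma losr_trans_chain:
  assumes "losr_trans T T' \<tau>"
  obtains n p mA mB PA PB EA EB where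
    "valid_sys (inX T')" "valid_sys (outA T')" "valid_sys (inY T')" "valid_sys (outB T')"
    "mA \<ge> 1" "mB \<ge> 1" "\<forall>l<n. p l \<ge> 0" "(\<Sum>l<n. p l) = 1"
    "\<forall>l<n. channel (dm (inX T')) (dm (inX T)*mA) (PA l) \<and> (is_cl (inX T') \<longrightarrow> cl_input (dm (inX T')) (dm (inX T)*mA) (PA l)) \<and>
              channel (dm (inY T')) (dm (inY T)*mB) (PB l) \<and> (is_cl (inY T') \<longrightarrow> cl_input (dm (inY T')) (dm (inY T)*mB) (PB l)) \<and>
              channel (dm (outA T)*mA) (dm (outA T')) (EA l) \<and> (is_cl (outA T') \<longrightarrow> cl_output (dm (outA T)*mA) (dm (outA T')) (EA l)) \<and>
              channel (dm (outB T)*mB) (dm (outB T')) (EB l) \<and> (is_cl (outB T') \<longrightarrow> cl_output (dm (outB T)*mB) (dm (outB T')) (EB l))"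
    "\<And>R M. M \<in> carrier_mat (dm (inX T')*dm (inY T')) (dm (inX T')*dm (inY T')) \<Longrightarrow>
        \<tau> R M = msum n (dm (outA T')*dm (outB T')) (\<lambda>l. complex_of_real (p l) \<cdot>\<^sub>m
          chain (dm (inX T)) (dm (inY T)) (dm (outA T)) (dm (outB T)) mA mB (dm (outA T')) (dm (outB T')) R (EA l) (EB l)
            (map_tensor (dm (inX T')) (dm (inY T')) (dm (inX T)*mA) (dm (inY T)*mB) (PA l) (PB l) M))"
  using assms unfolding losr_trans_def Let_def chain_def by blast

lemma msum_cong: "(\<And>l. l < n \<Longrightarrow> f l = g l) \<Longrightarrow> msum n d f = msum n d g"
  unfolding msum_def by (auto intro!: eq_matI sum.cong)

lemma local_chan_comp:
  assumes X': "valid_sys X'" and A': "valid_sys A'" and RA: "local_chan X A RA"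
    and PA: "channel (dm X') (dm X*m) PA" "is_cl X' \<longrightarrow> cl_input (dm X') (dm X*m) PA"
    and EA: "channel (dm A*m) (dm A') EA" "is_cl A' \<longrightarrow> cl_output (dm A*m) (dm A') EA"
  shows "local_chan X' A' (\<lambda>\<rho>. EA (map_tensor (dm X) m (dm A) m RA (\<lambda>N. N) (PA \<rho>)))"
proof -
  have cR: "channel (dm X) (dm A) RA" using RA by (simp add: local_chan_def)
  have cRI: "channel (dm X*m) (dm A*m) (map_tensor (dm X) m (dm A) m RA (\<lambda>N. N))" by (rule channel_RAI[OF cR])
  have lRI: "lin_map (dm X*m) (dm A*m) (map_tensor (dm X) m (dm A) m RA (\<lambda>N. N))" by (rule lin_map_map_tensor)
  have lE: "lin_map (dm A*m) (dm A') EA" using EA by (simp add: channel_def)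
  have lP: "lin_map (dm X') (dm X*m) PA" using PA by (simp add: channel_def)
  have ch: "channel (dm X') (dm A') (\<lambda>\<rho>. EA (map_tensor (dm X) m (dm A) m RA (\<lambda>N. N) (PA \<rho>)))"
    using channel_comp[OF channel_comp[OF PA(1) cRI] EA(1)] .
  have ci: "cl_input (dm X') (dm A') (\<lambda>\<rho>. EA (map_tensor (dm X) m (dm A) m RA (\<lambda>N. N) (PA \<rho>)))" if "is_cl X'"
    using PA(2) that by (simp add: cl_input_def lin_map_zero[OF lRI] lin_map_zero[OF lE])
  have co: "cl_output (dm X') (dm A') (\<lambda>\<rho>. EA (map_tensor (dm X) m (dm A) m RA (\<lambda>N. N) (PA \<rho>)))" if "is_cl A'"
    using EA(2) that lin_mapD(1)[OF lRI lin_mapD(1)[OF lP]] unfolding cl_output_def by blast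
  show ?thesis unfolding local_chan_def using X' A' ch ci co by blast
qed

lemma losr_free_cong: "losr_free T F \<Longrightarrow> (\<And>M. M \<in> carrier_mat (dm (inX T)*dm (inY T)) (dm (inX T)*dm (inY T)) \<Longrightarrow> F M = G M) \<Longrightarrow> losr_free T G"
proof -
  assume F: "losr_free T F" and e: "\<And>M. M \<in> carrier_mat (dm (inX T)*dm (inY T)) (dm (inX T)*dm (inY T)) \<Longrightarrow> F M = G M"
  from F obtain n p RA RB where w: "(\<forall>i<n. p i \<ge> 0) \<and> (\<Sum>i<n. p i) = 1 \<and>
       (\<forall>i<n. local_chan (inX T) (outA T) (RA i) \<and> local_chan (inY T) (outB T) (RB i)) \<and>
       (\<forall>M \<in> carrier_mat (dm (inX T)*dm (inY T)) (dm (inX T)*dm (inY T)).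
          F M = msum n (dm (outA T)*dm (outB T)) (\<lambda>i. complex_of_real (p i) \<cdot>\<^sub>m map_tensor (dm (inX T)) (dm (inY T)) (dm (outA T)) (dm (outB T)) (RA i) (RB i) M))"
    unfolding losr_free_def Let_def by blast
  then have "(\<forall>i<n. p i \<ge> 0) \<and> (\<Sum>i<n. p i) = 1 \<and>
       (\<forall>i<n. local_chan (inX T) (outA T) (RA i) \<and> local_chan (inY T) (outB T) (RB i)) \<and>
       (\<forall>M \<in> carrier_mat (dm (inX T)*dm (inY T)) (dm (inX T)*dm (inY T)).
          G M = msum n (dm (outA T)*dm (outB T)) (\<lambda>i. complex_of_real (p i) \<cdot>\<^sub>m map_tensor (dm (inX T)) (dm (inY T)) (dm (outA T)) (dm (outB T)) (RA i) (RB i) M))"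
    using e by simp
  then show "losr_free T G" unfolding losr_free_def Let_def by blast
qed

lemma losr_preserve:
  assumes S: "losr_free T S" and tau: "losr_trans T T' \<tau>"
  shows "losr_free T' (\<tau> S)"
proof -
  let ?dX = "dm (inX T)" and ?dY = "dm (inY T)" and ?dA = "dm (outA T)" and ?dB = "dm (outB T)"
  let ?dX' = "dm (inX T')" and ?dY' = "dm (inY T')" and ?dA' = "dm (outA T')" and ?dB' = "dm (outB T')"
  obtain n p RA RB where p: "\<forall>i<n. p i \<ge> 0" "(\<Sum>i<n. p i) = 1"
    and RAB: "\<forall>i<n. local_chan (inX T) (outA T) (RA i) \<and> local_chan (inY T) (outB T) (RB i)"
    and Sd: "\<forall>M \<in> carrier_mat (?dX*?dY) (?dX*?dY).
          S M = msum n (?dA*?dB) (\<lambda>i. complex_of_real (p i) \<cdot>\<^sub>m map_tensor ?dX ?dY ?dA ?dB (RA i) (RB i) M)"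
    using S unfolding losr_free_def Let_def by blast
  obtain n2 p2 mA mB PA PB EA EB where V: "valid_sys (inX T')" "valid_sys (outA T')" "valid_sys (inY T')" "valid_sys (outB T')"
    and m: "mA \<ge> 1" "mB \<ge> 1" and p2: "\<forall>l<n2. p2 l \<ge> 0" "(\<Sum>l<n2. p2 l) = 1"
    and ch: "\<forall>l<n2. channel ?dX' (?dX*mA) (PA l) \<and> (is_cl (inX T') \<longrightarrow> cl_input ?dX' (?dX*mA) (PA l)) \<and>
              channel ?dY' (?dY*mB) (PB l) \<and> (is_cl (inY T') \<longrightarrow> cl_input ?dY' (?dY*mB) (PB l)) \<and>
              channel (?dA*mA) ?dA' (EA l) \<and> (is_cl (outA T') \<longrightarrow> cl_output (?dA*mA) ?dA' (EA l)) \<and>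
              channel (?dB*mB) ?dB' (EB l) \<and> (is_cl (outB T') \<longrightarrow> cl_output (?dB*mB) ?dB' (EB l))"
    and tf: "\<And>R M. M \<in> carrier_mat (?dX'*?dY') (?dX'*?dY') \<Longrightarrow>
        \<tau> R M = msum n2 (?dA'*?dB') (\<lambda>l. complex_of_real (p2 l) \<cdot>\<^sub>m
          chain ?dX ?dY ?dA ?dB mA mB ?dA' ?dB' R (EA l) (EB l)
            (map_tensor ?dX' ?dY' (?dX*mA) (?dY*mB) (PA l) (PB l) M))"
    by (rule losr_trans_chain[OF tau], rule that)
  define CA where "CA l i = (\<lambda>\<rho>. EA l (map_tensor ?dX mA ?dA mA (RA i) (\<lambda>N. N) (PA l \<rho>)))" for l i
  define CB where "CB l i = (\<lambda>\<rho>. EB l (map_tensor ?dY mB ?dB mB (RB i) (\<lambda>N. N) (PB l \<rho>)))" for l i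
  have lRA: "lin_map ?dX ?dA (RA i)" "lin_map ?dY ?dB (RB i)" if "i < n" for i
    using RAB that by (auto simp: local_chan_def channel_def)
  have lPE: "lin_map ?dX' (?dX*mA) (PA l)" "lin_map ?dY' (?dY*mB) (PB l)"
     "lin_map (?dA*mA) ?dA' (EA l)" "lin_map (?dB*mB) ?dB' (EB l)" if "l < n2" for l
    using ch that by (auto simp: channel_def)
  have key: "\<tau> S M = msum (n2*n) (?dA'*?dB') (\<lambda>k. complex_of_real (p2 (k div n) * p (k mod n)) \<cdot>\<^sub>m
      map_tensor ?dX' ?dY' ?dA' ?dB' (CA (k div n) (k mod n)) (CB (k div n) (k mod n)) M)"
    if M: "M \<in> carrier_mat (?dX'*?dY') (?dX'*?dY')" for M
  proof -
    have step: "chain ?dX ?dY ?dA ?dB mA mB ?dA' ?dB' S (EA l) (EB l) (map_tensor ?dX' ?dY' (?dX*mA) (?dY*mB) (PA l) (PB l) M) =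
          msum n (?dA'*?dB') (\<lambda>i. complex_of_real (p i) \<cdot>\<^sub>m map_tensor ?dX' ?dY' ?dA' ?dB' (CA l i) (CB l i) M)"
      if l: "l < n2" for l
    proof -
      have "chain ?dX ?dY ?dA ?dB mA mB ?dA' ?dB' S (EA l) (EB l) (map_tensor ?dX' ?dY' (?dX*mA) (?dY*mB) (PA l) (PB l) M) =
          msum n (?dA'*?dB') (\<lambda>i. complex_of_real (p i) \<cdot>\<^sub>m chain ?dX ?dY ?dA ?dB mA mB ?dA' ?dB'
             (map_tensor ?dX ?dY ?dA ?dB (RA i) (RB i)) (EA l) (EB l) (map_tensor ?dX' ?dY' (?dX*mA) (?dY*mB) (PA l) (PB l) M))"
        by (rule chain_phi_msum) (use Sd in auto)
      also have "\<dots> = msum n (?dA'*?dB') (\<lambda>i. complex_of_real (p i) \<cdot>\<^sub>m map_tensor ?dX' ?dY' ?dA' ?dB' (CA l i) (CB l i) M)"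
        by (rule msum_cong) (simp add: CA_def CB_def chain_tensor[OF lRA(1) lRA(2) lPE(3)[OF l] lPE(4)[OF l] lPE(1)[OF l] lPE(2)[OF l] M])
      finally show ?thesis .
    qed
    have "\<tau> S M = msum n2 (?dA'*?dB') (\<lambda>l. complex_of_real (p2 l) \<cdot>\<^sub>m
          msum n (?dA'*?dB') (\<lambda>i. complex_of_real (p i) \<cdot>\<^sub>m map_tensor ?dX' ?dY' ?dA' ?dB' (CA l i) (CB l i) M))"
      unfolding tf[OF M] by (rule msum_cong) (simp add: step)
    also have "\<dots> = msum (n2*n) (?dA'*?dB') (\<lambda>k. complex_of_real (p2 (k div n) * p (k mod n)) \<cdot>\<^sub>m
      map_tensor ?dX' ?dY' ?dA' ?dB' (CA (k div n) (k mod n)) (CB (k div n) (k mod n)) M)"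
      by (rule msum_flatten) simp
    finally show ?thesis .
  qed
  have kb: "k div n < n2" "k mod n < n" if "k < n2*n" for k
    using div_lt[OF that] mod_lt[OF that] .
  have pk: "\<forall>k<n2*n. p2 (k div n) * p (k mod n) \<ge> 0" using kb p p2 by auto
  have ps: "(\<Sum>k<n2*n. p2 (k div n) * p (k mod n)) = 1"
    using p p2 by (simp add: sum_split sum_distrib_left[symmetric] sum_distrib_right[symmetric])
  have lc: "\<forall>k<n2*n. local_chan (inX T') (outA T') (CA (k div n) (k mod n)) \<and> local_chan (inY T') (outB T') (CB (k div n) (k mod n))"
  proof (intro allI impI conjI)
    fix k assume k: "k < n2*n"
    show "local_chan (inX T') (outA T') (CA (k div n) (k mod n))" unfolding CA_def
      by (rule local_chan_comp) (use V RAB ch kb[OF k] in auto)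
    show "local_chan (inY T') (outB T') (CB (k div n) (k mod n))" unfolding CB_def
      by (rule local_chan_comp) (use V RAB ch kb[OF k] in auto)
  qed
  show ?thesis unfolding losr_free_def Let_def
    apply (rule exI[of _ "n2*n"], rule exI[of _ "\<lambda>k. p2 (k div n) * p (k mod n)"])
    apply (rule exI[of _ "\<lambda>k. CA (k div n) (k mod n)"], rule exI[of _ "\<lambda>k. CB (k div n) (k mod n)"])
    using pk ps lc key by blast
qed

lemma chain_carrier[simp]: "chain dX dY dA dB mA mB dA' dB' R EA EB M \<in> carrier_mat (dA'*dB') (dA'*dB')"
  by (simp add: chain_def)

lemma dim_chain[simp]: "dim_row (chain dX dY dA dB mA mB dA' dB' R EA EB M) = dA'*dB'"
  "dim_col (chain dX dY dA dB mA mB dA' dB' R EA EB M) = dA'*dB'"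
  by (simp_all add: chain_def map_tensor_def)

lemma losr_free_carrier: "losr_free T S \<Longrightarrow> M \<in> carrier_mat (dm (inX T)*dm (inY T)) (dm (inX T)*dm (inY T)) \<Longrightarrow>
   S M \<in> carrier_mat (dm (outA T)*dm (outB T)) (dm (outA T)*dm (outB T))"
  unfolding losr_free_def Let_def by auto

lemma tau_mix:
  assumes tau: "losr_trans T T' \<tau>"
    and lR: "lin_map (dm (inX T)*dm (inY T)) (dm (outA T)*dm (outB T)) R"
    and Sc: "\<And>M. M \<in> carrier_mat (dm (inX T)*dm (inY T)) (dm (inX T)*dm (inY T)) \<Longrightarrow>
               S M \<in> carrier_mat (dm (outA T)*dm (outB T)) (dm (outA T)*dm (outB T))"
    and s: "s \<ge> 0"
    and M: "M \<in> carrier_mat (dm (inX T')*dm (inY T')) (dm (inX T')*dm (inY T'))"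
  shows "\<tau> (mix s R S) M = mix s (\<tau> R) (\<tau> S) M"
proof -
  let ?dX = "dm (inX T)" and ?dY = "dm (inY T)" and ?dA = "dm (outA T)" and ?dB = "dm (outB T)"
  let ?dX' = "dm (inX T')" and ?dY' = "dm (inY T')" and ?dA' = "dm (outA T')" and ?dB' = "dm (outB T')"
  obtain n2 p2 mA mB PA PB EA EB where
    "valid_sys (inX T')" "valid_sys (outA T')" "valid_sys (inY T')" "valid_sys (outB T')"
    "mA \<ge> 1" "mB \<ge> 1" "\<forall>l<n2. p2 l \<ge> 0" "(\<Sum>l<n2. p2 l) = 1"
    "\<forall>l<n2. channel ?dX' (?dX*mA) (PA l) \<and> (is_cl (inX T') \<longrightarrow> cl_input ?dX' (?dX*mA) (PA l)) \<and>
              channel ?dY' (?dY*mB) (PB l) \<and> (is_cl (inY T') \<longrightarrow> cl_input ?dY' (?dY*mB) (PB l)) \<and>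
              channel (?dA*mA) ?dA' (EA l) \<and> (is_cl (outA T') \<longrightarrow> cl_output (?dA*mA) ?dA' (EA l)) \<and>
              channel (?dB*mB) ?dB' (EB l) \<and> (is_cl (outB T') \<longrightarrow> cl_output (?dB*mB) ?dB' (EB l))"
    and tf: "\<And>R M. M \<in> carrier_mat (?dX'*?dY') (?dX'*?dY') \<Longrightarrow>
        \<tau> R M = msum n2 (?dA'*?dB') (\<lambda>l. complex_of_real (p2 l) \<cdot>\<^sub>m
          chain ?dX ?dY ?dA ?dB mA mB ?dA' ?dB' R (EA l) (EB l)
            (map_tensor ?dX' ?dY' (?dX*mA) (?dY*mB) (PA l) (PB l) M))"
    by (rule losr_trans_chain[OF tau], rule that)
  define q where "q i = (if i = (0::nat) then complex_of_real (1/(1+s)) else complex_of_real (1/(1+s)) * complex_of_real s)" for i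
  define F where "F i = (if i = (0::nat) then R else S)" for i
  let ?C = "\<lambda>Q l. chain ?dX ?dY ?dA ?dB mA mB ?dA' ?dB' Q (EA l) (EB l) (map_tensor ?dX' ?dY' (?dX*mA) (?dY*mB) (PA l) (PB l) M)"
  have Fc: "F i N \<in> carrier_mat (?dA*?dB) (?dA*?dB)" if "N \<in> carrier_mat (?dX*?dY) (?dX*?dY)" for i N
    using that lin_mapD(1)[OF lR] Sc by (simp add: F_def)
  have mixd: "mix s R S N = msum 2 (?dA*?dB) (\<lambda>i. q i \<cdot>\<^sub>m F i N)" if N: "N \<in> carrier_mat (?dX*?dY) (?dX*?dY)" for N
  proof (rule eq_matI)
    fix r c assume "r < dim_row (msum 2 (?dA*?dB) (\<lambda>i. q i \<cdot>\<^sub>m F i N))" "c < dim_col (msum 2 (?dA*?dB) (\<lambda>i. q i \<cdot>\<^sub>m F i N))"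
    then have rc: "r < ?dA*?dB" "c < ?dA*?dB" by auto
    have R: "R N \<in> carrier_mat (?dA*?dB) (?dA*?dB)" and SN: "S N \<in> carrier_mat (?dA*?dB) (?dA*?dB)"
      using lin_mapD(1)[OF lR N] Sc[OF N] .
    show "mix s R S N $$ (r,c) = msum 2 (?dA*?dB) (\<lambda>i. q i \<cdot>\<^sub>m F i N) $$ (r,c)"
      using rc R SN by (simp add: mix_def q_def F_def eval_nat_numeral lessThan_Suc algebra_simps)
  qed (use lin_mapD(1)[OF lR N] Sc[OF N] in \<open>auto simp: mix_def\<close>)
  have cm: "?C (mix s R S) l = msum 2 (?dA'*?dB') (\<lambda>i. q i \<cdot>\<^sub>m ?C (F i) l)" for l
    by (rule chain_phi_msum[OF mixd Fc])
  show ?thesis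
  proof (rule eq_matI)
    fix r c assume "r < dim_row (mix s (\<tau> R) (\<tau> S) M)" "c < dim_col (mix s (\<tau> R) (\<tau> S) M)"
    then have rc: "r < ?dA'*?dB'" "c < ?dA'*?dB'" using tf[OF M] by (auto simp: mix_def)
    have "\<tau> (mix s R S) M $$ (r,c) = (\<Sum>l<n2. complex_of_real (p2 l) * (q 0 * ?C R l $$ (r,c) + q 1 * ?C S l $$ (r,c)))"
      unfolding tf[OF M] cm using rc by (simp add: eval_nat_numeral lessThan_Suc F_def add.commute)
    also have "\<dots> = mix s (\<tau> R) (\<tau> S) M $$ (r,c)"
      unfolding tf[OF M] mix_def using rc
      by (simp add: q_def sum_distrib_left sum.distrib algebra_simps)
    finally show "\<tau> (mix s R S) M $$ (r,c) = mix s (\<tau> R) (\<tau> S) M $$ (r,c)" .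
  qed (use tf[OF M] in \<open>auto simp: mix_def\<close>)
qed

theorem mainTheorem4:
  fixes T T' :: btype and R :: cmap and \<tau> :: "cmap \<Rightarrow> cmap"
  assumes "resource T R"
    and "losr_trans T T' \<tau>"
  shows "M_abs T' (\<tau> R) \<le> M_abs T R"
proof -
  have lR: "lin_map (dm (inX T)*dm (inY T)) (dm (outA T)*dm (outB T)) R"
    using assms(1) unfolding resource_def Let_def by blast
  show ?thesis unfolding M_abs_def
  proof (rule Inf_superset_mono, rule subsetI)
    fix x assume "x \<in> {ereal s |s. s \<ge> 0 \<and> (\<exists>S. losr_free T S \<and> losr_free T (mix s R S))}"
    then obtain s S where x: "x = ereal s" and s: "s \<ge> 0" and S: "losr_free T S" and RS: "losr_free T (mix s R S)"
      by blast
    have 1: "losr_free T' (\<tau> S)" by (rule losr_preserve[OF S assms(2)])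
    have 2: "losr_free T' (\<tau> (mix s R S))" by (rule losr_preserve[OF RS assms(2)])
    have 3: "losr_free T' (mix s (\<tau> R) (\<tau> S))"
      by (rule losr_free_cong[OF 2 tau_mix[OF assms(2) lR losr_free_carrier[OF S] s]])
    show "x \<in> {ereal s |s. s \<ge> 0 \<and> (\<exists>S. losr_free T' S \<and> losr_free T' (mix s (\<tau> R) S))}"
      using x s 1 3 by blast
  qed
qed

end
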